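(* If an atomic flow $A$ is cycle-free and $A\to_{\mathsf c}^\star B$, then $B$ is cycle-free.
   Context: An atomic flow is a tuple $(V,E,\eta,up,lo)$: finite sets of vertices and edges, a labelling of vertices by interaction, cut, weakening, coweakening, contraction or cocontraction, and maps $up:E\to V\cup\{\top\}$, $lo:E\to V\cup\{\bot\}$. Upper edges of $\nu$: $lo(\epsilon)=\nu$; lower edges: $up(\epsilon)=\nu$. (Upper, lower) edge numbers: $(0,2)$ interaction, $(2,0)$ cut, $(0,1)$ weakening, $(1,0)$ coweakening, $(2,1)$ contraction, $(1,2)$ cocontraction; no directed cycles; there is $\pi:E\to\{+,-\}$ giving all edges of a (co)contraction the same sign and the two edges of an interaction/cut different signs. A path from $\nu$ to $\nu'$ is a sequence of edges $\epsilon_1,\dots,\epsilon_h$ with $lo(\epsilon_i)=up(\epsilon_{i+1})$, $up(\epsilon_1)=\nu$, $lo(\epsilon_h)=\nu'$; its reversal is a path from $\nu'$ to $\nu$. An $\mathsf{ai}$-path from $\nu$ to $\nu'$ is either a path from $\nu$ to $\nu'$ or a sequence $\epsilon_1,\dots,\epsilon_k,\epsilon_{k+1},\dots,\epsilon_h$ with $\epsilon_k\neq\epsilon_{k+1}$ such that, for some interaction or cut vertex $\nu''$, $\epsilon_1,\dots,\epsilon_k$ is an $\mathsf{ai}$-path from $\nu$ to $\nu''$ and $\epsilon_{k+1},\dots,\epsilon_h$ is an $\mathsf{ai}$-path from $\nu''$ to $\nu'$. An $\mathsf{ai}$-cycle is an $\mathsf{ai}$-path from a vertex to itself in which no edge appears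 twice. A flow is cycle-free if it has no $\mathsf{ai}$-cycle. $\to_{\mathsf c}^\star$ is the reflexive-transitive closure of $\to_{\mathsf c}$, where $A\to_{\mathsf c}B$ means $B$ results from $A$ by one of these subgraph replacements: (c1) a contraction with upper edges $\epsilon_1,\epsilon_2$ whose lower edge is an upper edge of a cut with other upper edge $\epsilon_3$: replace by a new cocontraction with upper edge $\epsilon_3$ and new lower edges $\delta_1,\delta_2$, and two new cuts with upper edges $\{\epsilon_1,\delta_1\}$ and $\{\epsilon_2,\delta_2\}$; (c2) an interaction with lower edges $\epsilon_3,\epsilon_4$ where $\epsilon_4$ is the upper edge of a cocontraction with lower edges $\epsilon_1,\epsilon_2$: replace by a new contraction with lower edge $\epsilon_3$ and new upper edges $\delta_1,\delta_2$, and two new interactions with lower edges $\{\epsilon_1,\delta_1\}$ and $\{\epsilon_2,\delta_2\}$; (c3) a contraction with upper edges $\epsilon_1,\epsilon_2$ whose lower edge is the upper edge of a cocontraction with lower edges $\epsilon_3,\epsilon_4$: replace by cocontractions $\kappa_1,\kappa_2$ with upper edges $\epsilon_1,\epsilon_2$, contractions $\gamma_3,\gamma_4$ with lower edges $\epsilon_3,\epsilon_4$, and four new edges, one from each $\kappa_i$ to each $\gamma_j$. *)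

theory Defs
  imports Main
begin

datatype kind = Interaction | Cut | Weakening | Coweakening | Contraction | Cocontraction

text \<open>Endpoints of edges: Top (for up), Bot (for lo), or a vertex.\<close>
datatype 'v node = Top | Bot | Vx 'v

record ('v, 'e) flow =
  V   :: "'v set"
  E   :: "'e set"
  lab :: "'v \<Rightarrow> kind"
  up  :: "'e \<Rightarrow> 'v node"
  lo  :: "'e \<Rightarrow> 'v node"

fun n_upper :: "kind \<Rightarrow> nat" where
  "n_upper Interaction = 0" | "n_upper Cut = 2" | "n_upper Weakening = 0"
| "n_upper Coweakening = 1" | "n_upper Contraction = 2" | "n_upper Cocontraction = 1"

fun n_lower :: "kind \<Rightarrow> nat" where
  "n_lower Interaction = 2" | "n_lower Cut = 0" | "n_lower Weakening = 1"
| "n_lower Coweakening = 0" | "n_lower Contraction = 1" | "n_lower Cocontraction = 2"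

definition upper_edges :: "('v,'e) flow \<Rightarrow> 'v \<Rightarrow> 'e set" where
  "upper_edges F v = {e \<in> E F. lo F e = Vx v}"

definition lower_edges :: "('v,'e) flow \<Rightarrow> 'v \<Rightarrow> 'e set" where
  "lower_edges F v = {e \<in> E F. up F e = Vx v}"

definition dpath :: "('v,'e) flow \<Rightarrow> 'v \<Rightarrow> 'e list \<Rightarrow> 'v \<Rightarrow> bool" where
  "dpath F v es v' \<longleftrightarrow> es \<noteq> [] \<and> set es \<subseteq> E F \<and> up F (hd es) = Vx v \<and> lo F (last es) = Vx v'
     \<and> (\<forall>i. Suc i < length es \<longrightarrow> lo F (es ! i) = up F (es ! Suc i))"

definition atomic_flow :: "('v,'e) flow \<Rightarrow> bool" where
  "atomic_flow F \<longleftrightarrow> finite (V F) \<and> finite (E F)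
   \<and> (\<forall>e \<in> E F. up F e \<in> Vx ` V F \<union> {Top} \<and> lo F e \<in> Vx ` V F \<union> {Bot})
   \<and> (\<forall>v \<in> V F. card (upper_edges F v) = n_upper (lab F v) \<and> card (lower_edges F v) = n_lower (lab F v))
   \<and> \<not> (\<exists>v es. dpath F v es v)
   \<and> (\<exists>\<pi> :: 'e \<Rightarrow> bool.
        (\<forall>v \<in> V F. lab F v \<in> {Contraction, Cocontraction} \<longrightarrow>
            (\<forall>e \<in> upper_edges F v \<union> lower_edges F v. \<forall>e' \<in> upper_edges F v \<union> lower_edges F v. \<pi> e = \<pi> e'))
      \<and> (\<forall>v \<in> V F. lab F v \<in> {Interaction, Cut} \<longrightarrow>
            (\<forall>e \<in> upper_edges F v \<union> lower_edges F v. \<forall>e' \<in> upper_edges F v \<union> lower_edges F v. e \<noteq> e' \<longrightarrow> \<pi> e \<noteq> \<pi> e')))"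

inductive aipath :: "('v,'e) flow \<Rightarrow> 'v \<Rightarrow> 'e list \<Rightarrow> 'v \<Rightarrow> bool" for F where
  fwd: "dpath F v es v' \<Longrightarrow> aipath F v es v'"
| bwd: "dpath F v' es v \<Longrightarrow> aipath F v (rev es) v'"
| join: "aipath F v xs w \<Longrightarrow> aipath F w ys v' \<Longrightarrow> w \<in> V F \<Longrightarrow> lab F w \<in> {Interaction, Cut}
          \<Longrightarrow> last xs \<noteq> hd ys \<Longrightarrow> aipath F v (xs @ ys) v'"

definition ai_cycle :: "('v,'e) flow \<Rightarrow> 'v \<Rightarrow> 'e list \<Rightarrow> bool" where
  "ai_cycle F v es \<longleftrightarrow> aipath F v es v \<and> distinct es"

definition cycle_free :: "('v,'e) flow \<Rightarrow> bool" where
  "cycle_free F \<longleftrightarrow> \<not> (\<exists>v es. ai_cycle F v es)"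

text \<open>B is given by vertex set Vs, edge set Es and maps agreeing with l, u, d on Vs resp. Es
  (the maps of a flow are only meaningful on its vertices/edges).\<close>
definition is_flow_on :: "('v,'e) flow \<Rightarrow> 'v set \<Rightarrow> 'e set \<Rightarrow> ('v \<Rightarrow> kind) \<Rightarrow> ('e \<Rightarrow> 'v node) \<Rightarrow> ('e \<Rightarrow> 'v node) \<Rightarrow> bool" where
  "is_flow_on B Vs Es l u d \<longleftrightarrow> V B = Vs \<and> E B = Es \<and> (\<forall>v \<in> Vs. lab B v = l v)
     \<and> (\<forall>e \<in> Es. up B e = u e \<and> lo B e = d e)"

definition step_c1 :: "('v,'e) flow \<Rightarrow> ('v,'e) flow \<Rightarrow> bool" where
  "step_c1 A B \<longleftrightarrow> (\<exists>\<nu> \<mu> \<epsilon> \<epsilon>1 \<epsilon>2 \<epsilon>3 \<kappa> \<chi>1 \<chi>2 \<delta>1 \<delta>2.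
     \<nu> \<in> V A \<and> \<mu> \<in> V A \<and> lab A \<nu> = Contraction \<and> lab A \<mu> = Cut
     \<and> {\<epsilon>, \<epsilon>1, \<epsilon>2, \<epsilon>3} \<subseteq> E A \<and> \<epsilon>1 \<noteq> \<epsilon>2 \<and> \<epsilon>3 \<noteq> \<epsilon>
     \<and> lo A \<epsilon>1 = Vx \<nu> \<and> lo A \<epsilon>2 = Vx \<nu> \<and> up A \<epsilon> = Vx \<nu> \<and> lo A \<epsilon> = Vx \<mu> \<and> lo A \<epsilon>3 = Vx \<mu>
     \<and> \<kappa> \<notin> V A \<and> \<chi>1 \<notin> V A \<and> \<chi>2 \<notin> V A \<and> distinct [\<kappa>, \<chi>1, \<chi>2]
     \<and> \<delta>1 \<notin> E A \<and> \<delta>2 \<notin> E A \<and> \<delta>1 \<noteq> \<delta>2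
     \<and> is_flow_on B (V A - {\<nu>, \<mu>} \<union> {\<kappa>, \<chi>1, \<chi>2}) (E A - {\<epsilon>} \<union> {\<delta>1, \<delta>2})
         ((lab A)(\<kappa> := Cocontraction, \<chi>1 := Cut, \<chi>2 := Cut))
         ((up A)(\<delta>1 := Vx \<kappa>, \<delta>2 := Vx \<kappa>))
         ((lo A)(\<epsilon>3 := Vx \<kappa>, \<epsilon>1 := Vx \<chi>1, \<delta>1 := Vx \<chi>1, \<epsilon>2 := Vx \<chi>2, \<delta>2 := Vx \<chi>2)))"

definition step_c2 :: "('v,'e) flow \<Rightarrow> ('v,'e) flow \<Rightarrow> bool" where
  "step_c2 A B \<longleftrightarrow> (\<exists>\<iota> \<kappa> \<epsilon>1 \<epsilon>2 \<epsilon>3 \<epsilon>4 \<gamma> \<iota>1 \<iota>2 \<delta>1 \<delta>2.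
     \<iota> \<in> V A \<and> \<kappa> \<in> V A \<and> lab A \<iota> = Interaction \<and> lab A \<kappa> = Cocontraction
     \<and> {\<epsilon>1, \<epsilon>2, \<epsilon>3, \<epsilon>4} \<subseteq> E A \<and> \<epsilon>1 \<noteq> \<epsilon>2 \<and> \<epsilon>3 \<noteq> \<epsilon>4
     \<and> up A \<epsilon>3 = Vx \<iota> \<and> up A \<epsilon>4 = Vx \<iota> \<and> lo A \<epsilon>4 = Vx \<kappa> \<and> up A \<epsilon>1 = Vx \<kappa> \<and> up A \<epsilon>2 = Vx \<kappa>
     \<and> \<gamma> \<notin> V A \<and> \<iota>1 \<notin> V A \<and> \<iota>2 \<notin> V A \<and> distinct [\<gamma>, \<iota>1, \<iota>2]
     \<and> \<delta>1 \<notin> E A \<and> \<delta>2 \<notin> E A \<and> \<delta>1 \<noteq> \<delta>2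
     \<and> is_flow_on B (V A - {\<iota>, \<kappa>} \<union> {\<gamma>, \<iota>1, \<iota>2}) (E A - {\<epsilon>4} \<union> {\<delta>1, \<delta>2})
         ((lab A)(\<gamma> := Contraction, \<iota>1 := Interaction, \<iota>2 := Interaction))
         ((up A)(\<epsilon>3 := Vx \<gamma>, \<epsilon>1 := Vx \<iota>1, \<delta>1 := Vx \<iota>1, \<epsilon>2 := Vx \<iota>2, \<delta>2 := Vx \<iota>2))
         ((lo A)(\<delta>1 := Vx \<gamma>, \<delta>2 := Vx \<gamma>)))"

definition step_c3 :: "('v,'e) flow \<Rightarrow> ('v,'e) flow \<Rightarrow> bool" where
  "step_c3 A B \<longleftrightarrow> (\<exists>\<gamma> \<kappa> \<epsilon> \<epsilon>1 \<epsilon>2 \<epsilon>3 \<epsilon>4 \<kappa>1 \<kappa>2 \<gamma>3 \<gamma>4 d13 d14 d23 d24.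
     \<gamma> \<in> V A \<and> \<kappa> \<in> V A \<and> lab A \<gamma> = Contraction \<and> lab A \<kappa> = Cocontraction
     \<and> {\<epsilon>, \<epsilon>1, \<epsilon>2, \<epsilon>3, \<epsilon>4} \<subseteq> E A \<and> \<epsilon>1 \<noteq> \<epsilon>2 \<and> \<epsilon>3 \<noteq> \<epsilon>4
     \<and> lo A \<epsilon>1 = Vx \<gamma> \<and> lo A \<epsilon>2 = Vx \<gamma> \<and> up A \<epsilon> = Vx \<gamma> \<and> lo A \<epsilon> = Vx \<kappa>
     \<and> up A \<epsilon>3 = Vx \<kappa> \<and> up A \<epsilon>4 = Vx \<kappa>
     \<and> \<kappa>1 \<notin> V A \<and> \<kappa>2 \<notin> V A \<and> \<gamma>3 \<notin> V A \<and> \<gamma>4 \<notin> V A \<and> distinct [\<kappa>1, \<kappa>2, \<gamma>3, \<gamma>4]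
     \<and> d13 \<notin> E A \<and> d14 \<notin> E A \<and> d23 \<notin> E A \<and> d24 \<notin> E A \<and> distinct [d13, d14, d23, d24]
     \<and> is_flow_on B (V A - {\<gamma>, \<kappa>} \<union> {\<kappa>1, \<kappa>2, \<gamma>3, \<gamma>4}) (E A - {\<epsilon>} \<union> {d13, d14, d23, d24})
         ((lab A)(\<kappa>1 := Cocontraction, \<kappa>2 := Cocontraction, \<gamma>3 := Contraction, \<gamma>4 := Contraction))
         ((up A)(\<epsilon>3 := Vx \<gamma>3, \<epsilon>4 := Vx \<gamma>4, d13 := Vx \<kappa>1, d14 := Vx \<kappa>1, d23 := Vx \<kappa>2, d24 := Vx \<kappa>2))
         ((lo A)(\<epsilon>1 := Vx \<kappa>1, \<epsilon>2 := Vx \<kappa>2, d13 := Vx \<gamma>3, d14 := Vx \<gamma>4, d23 := Vx \<gamma>3, d24 := Vx \<gamma>4)))"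

definition step_c :: "('v,'e) flow \<Rightarrow> ('v,'e) flow \<Rightarrow> bool" where
  "step_c A B \<longleftrightarrow> step_c1 A B \<or> step_c2 A B \<or> step_c3 A B"

end

theory Submission
  imports Defs "HOL-Library.Transitive_Closure_Table"
begin


definition pol :: "('v,'e) flow \<Rightarrow> ('e \<Rightarrow> bool) \<Rightarrow> bool" where
  "pol F \<pi> \<longleftrightarrow> (\<forall>v \<in> V F. lab F v \<in> {Contraction, Cocontraction} \<longrightarrow>
            (\<forall>e \<in> upper_edges F v \<union> lower_edges F v. \<forall>e' \<in> upper_edges F v \<union> lower_edges F v. \<pi> e = \<pi> e'))
      \<and> (\<forall>v \<in> V F. lab F v \<in> {Interaction, Cut} \<longrightarrow>
            (\<forall>e \<in> upper_edges F v \<union> lower_edges F v. \<forall>e' \<in> upper_edges F v \<union> lower_edges F v. e \<noteq> e' \<longrightarrow> \<pi> e \<noteq> \<pi> e'))"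

definition struct :: "('v,'e) flow \<Rightarrow> ('e \<Rightarrow> bool) \<Rightarrow> ('v \<Rightarrow> nat) \<Rightarrow> bool" where
  "struct F \<pi> r \<longleftrightarrow> finite (E F)
   \<and> (\<forall>e \<in> E F. up F e \<in> Vx ` V F \<union> {Top} \<and> lo F e \<in> Vx ` V F \<union> {Bot})
   \<and> (\<forall>v \<in> V F. card (upper_edges F v) \<le> n_upper (lab F v) \<and> card (lower_edges F v) \<le> n_lower (lab F v))
   \<and> pol F \<pi>
   \<and> (\<forall>e \<in> E F. \<forall>a b. up F e = Vx a \<longrightarrow> lo F e = Vx b \<longrightarrow> (\<pi> e \<longrightarrow> r a < r b) \<and> (\<not> \<pi> e \<longrightarrow> r b < r a))"

lemma struct_fin: "struct F \<pi> r \<Longrightarrow> finite (E F)"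
  unfolding struct_def by blast
lemma struct_up: "struct F \<pi> r \<Longrightarrow> e \<in> E F \<Longrightarrow> up F e \<in> Vx ` V F \<union> {Top}"
  unfolding struct_def by blast
lemma struct_lo: "struct F \<pi> r \<Longrightarrow> e \<in> E F \<Longrightarrow> lo F e \<in> Vx ` V F \<union> {Bot}"
  unfolding struct_def by blast
lemma struct_cu: "struct F \<pi> r \<Longrightarrow> v \<in> V F \<Longrightarrow> card (upper_edges F v) \<le> n_upper (lab F v)"
  unfolding struct_def by blast
lemma struct_cl: "struct F \<pi> r \<Longrightarrow> v \<in> V F \<Longrightarrow> card (lower_edges F v) \<le> n_lower (lab F v)"
  unfolding struct_def by blast
lemma struct_pol: "struct F \<pi> r \<Longrightarrow> pol F \<pi>"
  unfolding struct_def by blast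
lemma struct_rank: "struct F \<pi> r \<Longrightarrow> e \<in> E F \<Longrightarrow> up F e = Vx a \<Longrightarrow> lo F e = Vx b \<Longrightarrow> (\<pi> e \<longrightarrow> r a < r b) \<and> (\<not> \<pi> e \<longrightarrow> r b < r a)"
  unfolding struct_def by blast
lemma pol_cc: "pol F \<pi> \<Longrightarrow> v \<in> V F \<Longrightarrow> lab F v \<in> {Contraction, Cocontraction} \<Longrightarrow> e \<in> upper_edges F v \<union> lower_edges F v \<Longrightarrow> e' \<in> upper_edges F v \<union> lower_edges F v \<Longrightarrow> \<pi> e = \<pi> e'"
  unfolding pol_def by blast
lemma pol_ic: "pol F \<pi> \<Longrightarrow> v \<in> V F \<Longrightarrow> lab F v \<in> {Interaction, Cut} \<Longrightarrow> e \<in> upper_edges F v \<union> lower_edges F v \<Longrightarrow> e' \<in> upper_edges F v \<union> lower_edges F v \<Longrightarrow> e \<noteq> e' \<Longrightarrow> \<pi> e \<noteq> \<pi> e'"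
  unfolding pol_def by blast

lemma kind_both: "n_upper k \<ge> 1 \<Longrightarrow> n_lower k \<ge> 1 \<Longrightarrow> k \<in> {Contraction, Cocontraction}"
  by (cases k) auto

lemma card_ge1: "finite S \<Longrightarrow> x \<in> S \<Longrightarrow> card S \<ge> 1"
  by (metis One_nat_def Suc_leI card_gt_0_iff empty_iff)

lemma dpath_tl:
  assumes "dpath F v (e # rest) v'" "rest \<noteq> []" "lo F e = Vx u"
  shows "dpath F u rest v'"
proof -
  have "lo F ((e#rest) ! 0) = up F ((e#rest) ! Suc 0)" using assms(1,2) unfolding dpath_def by auto
  then have "up F (hd rest) = Vx u" using assms(2,3) by (cases rest) auto
  then show ?thesis using assms unfolding dpath_def by auto
qed

lemma dpath_mono:
  assumes S: "struct F \<pi> r"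
  shows "dpath F v es v' \<Longrightarrow> \<exists>d. (\<forall>e\<in>set es. \<pi> e = d) \<and> (d \<longrightarrow> r v < r v') \<and> (\<not> d \<longrightarrow> r v' < r v)"
proof (induction es arbitrary: v)
  case Nil then show ?case by (simp add: dpath_def)
next
  case (Cons e rest)
  have eE: "e \<in> E F" and upe: "up F e = Vx v" using Cons.prems unfolding dpath_def by auto
  show ?case
  proof (cases "rest = []")
    case True
    then have "lo F e = Vx v'" using Cons.prems unfolding dpath_def by auto
    then show ?thesis using struct_rank[OF S eE upe] True by (cases "\<pi> e") auto
  next
    case False
    have "\<forall>i. Suc i < length (e # rest) \<longrightarrow> lo F ((e # rest) ! i) = up F ((e # rest) ! Suc i)"
      using Cons.prems unfolding dpath_def by blast
    then have "lo F ((e # rest) ! 0) = up F ((e # rest) ! Suc 0)" using False by (metis length_Cons length_greater_0_conv less_Suc_eq_0_disj)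
    then have eq: "lo F e = up F (hd rest)" using False by (simp add: hd_conv_nth)
    have hE: "hd rest \<in> E F" using Cons.prems False unfolding dpath_def by auto
    have m1: "lo F e \<in> Vx ` V F \<union> {Bot}" "up F (hd rest) \<in> Vx ` V F \<union> {Top}"
      using struct_lo[OF S eE] struct_up[OF S hE] by blast+
    have "lo F e \<in> Vx ` V F" using m1 eq by auto
    then obtain u where u: "u \<in> V F" "lo F e = Vx u" by blast
    have dp: "dpath F u rest v'" using dpath_tl[OF Cons.prems False u(2)] .
    from Cons.IH[OF dp] obtain d where d: "\<forall>e\<in>set rest. \<pi> e = d" "d \<longrightarrow> r u < r v'" "\<not> d \<longrightarrow> r v' < r u" by blast
    have fin: "finite (E F)" using struct_fin[OF S] .
    have up1: "e \<in> upper_edges F u" using eE u unfolding upper_edges_def by auto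
    have lo1: "hd rest \<in> lower_edges F u" using hE u eq unfolding lower_edges_def by auto
    have "card (upper_edges F u) \<ge> 1" by (rule card_ge1[OF _ up1]) (use fin in \<open>simp add: upper_edges_def\<close>)
    moreover have "card (lower_edges F u) \<ge> 1" by (rule card_ge1[OF _ lo1]) (use fin in \<open>simp add: lower_edges_def\<close>)
    ultimately have "lab F u \<in> {Contraction, Cocontraction}" using struct_cu[OF S u(1)] struct_cl[OF S u(1)]
      by (intro kind_both) (meson order_trans)+
    then have "\<pi> e = \<pi> (hd rest)" using pol_cc[OF struct_pol[OF S] u(1)] up1 lo1 by blast
    then have pe: "\<pi> e = d" using d(1) False by simp
    have "(\<pi> e \<longrightarrow> r v < r u) \<and> (\<not> \<pi> e \<longrightarrow> r u < r v)" using struct_rank[OF S eE upe u(2)] .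
    then show ?thesis using d pe by (intro exI[of _ d]) auto
  qed
qed

lemma aipath_mono:
  assumes S: "struct F \<pi> r"
  shows "aipath F v es v' \<Longrightarrow> \<exists>d. es \<noteq> [] \<and> set es \<subseteq> E F \<and> (d \<longrightarrow> r v < r v') \<and> (\<not> d \<longrightarrow> r v' < r v)
     \<and> ((up F (hd es) = Vx v \<and> \<pi> (hd es) = d) \<or> (lo F (hd es) = Vx v \<and> \<pi> (hd es) = (\<not> d)))
     \<and> ((lo F (last es) = Vx v' \<and> \<pi> (last es) = d) \<or> (up F (last es) = Vx v' \<and> \<pi> (last es) = (\<not> d)))"
proof (induction rule: aipath.induct)
  case (fwd v es v')
  from dpath_mono[OF S fwd] obtain d where d: "\<forall>e\<in>set es. \<pi> e = d" "d \<longrightarrow> r v < r v'" "\<not> d \<longrightarrow> r v' < r v" by blast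
  show ?case using fwd d unfolding dpath_def by (intro exI[of _ d]) auto
next
  case (bwd v' es v)
  from dpath_mono[OF S bwd] obtain d where d: "\<forall>e\<in>set es. \<pi> e = d" "d \<longrightarrow> r v' < r v" "\<not> d \<longrightarrow> r v < r v'" by blast
  show ?case using bwd d unfolding dpath_def by (intro exI[of _ "\<not> d"]) (auto simp: hd_rev last_rev)
next
  case (join v xs w ys v')
  from join.IH(1) obtain o1 where o1: "xs \<noteq> [] \<and> set xs \<subseteq> E F \<and> (o1 \<longrightarrow> r v < r w) \<and> (\<not> o1 \<longrightarrow> r w < r v)
     \<and> ((up F (hd xs) = Vx v \<and> \<pi> (hd xs) = o1) \<or> (lo F (hd xs) = Vx v \<and> \<pi> (hd xs) = (\<not> o1)))
     \<and> ((lo F (last xs) = Vx w \<and> \<pi> (last xs) = o1) \<or> (up F (last xs) = Vx w \<and> \<pi> (last xs) = (\<not> o1)))" by blast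
  from join.IH(2) obtain o2 where o2: "ys \<noteq> [] \<and> set ys \<subseteq> E F \<and> (o2 \<longrightarrow> r w < r v') \<and> (\<not> o2 \<longrightarrow> r v' < r w)
     \<and> ((up F (hd ys) = Vx w \<and> \<pi> (hd ys) = o2) \<or> (lo F (hd ys) = Vx w \<and> \<pi> (hd ys) = (\<not> o2)))
     \<and> ((lo F (last ys) = Vx v' \<and> \<pi> (last ys) = o2) \<or> (up F (last ys) = Vx v' \<and> \<pi> (last ys) = (\<not> o2)))" by blast
  have fin: "finite (E F)" using struct_fin[OF S] .
  have x1: "xs \<noteq> []" "set xs \<subseteq> E F" using o1 by blast+
  have y1: "ys \<noteq> []" "set ys \<subseteq> E F" using o2 by blast+
  have lE: "last xs \<in> E F" using x1 last_in_set by blast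
  have hE: "hd ys \<in> E F" using y1 hd_in_set by blast
  have polw: "\<And>e e'. e \<in> upper_edges F w \<union> lower_edges F w \<Longrightarrow> e' \<in> upper_edges F w \<union> lower_edges F w \<Longrightarrow> e \<noteq> e' \<Longrightarrow> \<pi> e \<noteq> \<pi> e'"
    using pol_ic[OF struct_pol[OF S] join.hyps(3,4)] by blast
  have xl: "(lo F (last xs) = Vx w \<and> \<pi> (last xs) = o1) \<or> (up F (last xs) = Vx w \<and> \<pi> (last xs) = (\<not> o1))" using o1 by blast
  have yh: "(up F (hd ys) = Vx w \<and> \<pi> (hd ys) = o2) \<or> (lo F (hd ys) = Vx w \<and> \<pi> (hd ys) = (\<not> o2))" using o2 by blast
  have xh: "(up F (hd xs) = Vx v \<and> \<pi> (hd xs) = o1) \<or> (lo F (hd xs) = Vx v \<and> \<pi> (hd xs) = (\<not> o1))" using o1 by blast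
  have yl: "(lo F (last ys) = Vx v' \<and> \<pi> (last ys) = o2) \<or> (up F (last ys) = Vx v' \<and> \<pi> (last ys) = (\<not> o2))" using o2 by blast
  have m1: "o1 \<longrightarrow> r v < r w" "\<not> o1 \<longrightarrow> r w < r v" using o1 by blast+
  have m2: "o2 \<longrightarrow> r w < r v'" "\<not> o2 \<longrightarrow> r v' < r w" using o2 by blast+
  have "o1 = o2"
  proof (cases "lab F w = Cut")
    case True
    then have "card (lower_edges F w) = 0" using struct_cl[OF S join.hyps(3)] by simp
    then have "lower_edges F w = {}" using fin unfolding lower_edges_def by simp
    then have n1: "up F (last xs) \<noteq> Vx w" "up F (hd ys) \<noteq> Vx w" using lE hE unfolding lower_edges_def by auto
    from n1(1) xl have a: "lo F (last xs) = Vx w" "\<pi> (last xs) = o1" by auto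
    from n1(2) yh have b: "lo F (hd ys) = Vx w" "\<pi> (hd ys) = (\<not> o2)" by auto
    have "last xs \<in> upper_edges F w" "hd ys \<in> upper_edges F w" using a b lE hE unfolding upper_edges_def by auto
    then have "\<pi> (last xs) \<noteq> \<pi> (hd ys)" using polw join.hyps(5) by blast
    then show ?thesis using a b by simp
  next
    case False
    then have "lab F w = Interaction" using join.hyps(4) by auto
    then have "card (upper_edges F w) = 0" using struct_cu[OF S join.hyps(3)] by simp
    then have "upper_edges F w = {}" using fin unfolding upper_edges_def by simp
    then have n1: "lo F (last xs) \<noteq> Vx w" "lo F (hd ys) \<noteq> Vx w" using lE hE unfolding upper_edges_def by auto
    from n1(1) xl have a: "up F (last xs) = Vx w" "\<pi> (last xs) = (\<not> o1)" by auto
    from n1(2) yh have b: "up F (hd ys) = Vx w" "\<pi> (hd ys) = o2" by auto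
    have "last xs \<in> lower_edges F w" "hd ys \<in> lower_edges F w" using a b lE hE unfolding lower_edges_def by auto
    then have "\<pi> (last xs) \<noteq> \<pi> (hd ys)" using polw join.hyps(5) by blast
    then show ?thesis using a b by simp
  qed
  have hd: "hd (xs @ ys) = hd xs" using x1 by simp
  have la: "last (xs @ ys) = last ys" using y1 by simp
  show ?case unfolding hd la
  proof (rule exI[of _ o1], intro conjI)
    show "xs @ ys \<noteq> []" using x1 by simp
    show "set (xs @ ys) \<subseteq> E F" using x1 y1 by simp
    show "o1 \<longrightarrow> r v < r v'" using m1 m2 \<open>o1 = o2\<close> by auto
    show "\<not> o1 \<longrightarrow> r v' < r v" using m1 m2 \<open>o1 = o2\<close> by auto
    show "up F (hd xs) = Vx v \<and> \<pi> (hd xs) = o1 \<or> lo F (hd xs) = Vx v \<and> \<pi> (hd xs) = (\<not> o1)" using xh .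
    show "lo F (last ys) = Vx v' \<and> \<pi> (last ys) = o1 \<or> up F (last ys) = Vx v' \<and> \<pi> (last ys) = (\<not> o1)" using yl \<open>o1 = o2\<close> by simp
  qed
qed

lemma struct_cf: "struct F \<pi> r \<Longrightarrow> cycle_free F"
proof -
  assume S: "struct F \<pi> r"
  { fix v es assume "aipath F v es v"
    from aipath_mono[OF S this] have False by auto }
  then show ?thesis unfolding cycle_free_def ai_cycle_def by blast
qed



definition arc :: "('v,'e) flow \<Rightarrow> ('e \<Rightarrow> bool) \<Rightarrow> 'e \<Rightarrow> 'v \<Rightarrow> 'v \<Rightarrow> bool" where
  "arc F \<pi> e a b \<longleftrightarrow> e \<in> E F \<and> ((\<pi> e \<and> up F e = Vx a \<and> lo F e = Vx b) \<or> (\<not> \<pi> e \<and> lo F e = Vx a \<and> up F e = Vx b))"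

inductive awalk :: "('v,'e) flow \<Rightarrow> ('e \<Rightarrow> bool) \<Rightarrow> 'v \<Rightarrow> 'e list \<Rightarrow> 'v \<Rightarrow> bool" for F \<pi> where
  one: "arc F \<pi> e a b \<Longrightarrow> awalk F \<pi> a [e] b"
| snoc: "awalk F \<pi> a es u \<Longrightarrow> arc F \<pi> e u b \<Longrightarrow> awalk F \<pi> a (es @ [e]) b"

lemma awalk_cons: "awalk F \<pi> b es c \<Longrightarrow> arc F \<pi> e a b \<Longrightarrow> awalk F \<pi> a (e # es) c"
proof (induction rule: awalk.induct)
  case (one e' a' b')
  then show ?case using awalk.snoc[OF awalk.one] by fastforce
next
  case (snoc a' es u e' b')
  then show ?case using awalk.snoc by fastforce
qed

lemma awalk_last: "awalk F \<pi> a es b \<Longrightarrow> es \<noteq> [] \<and> (\<exists>x. arc F \<pi> (last es) x b)"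
  by (induction rule: awalk.induct) auto

lemma dpath_single: "e \<in> E F \<Longrightarrow> up F e = Vx a \<Longrightarrow> lo F e = Vx b \<Longrightarrow> dpath F a [e] b"
  unfolding dpath_def by auto

lemma dpath_snoc:
  assumes "dpath F v es u" "e \<in> E F" "up F e = Vx u" "lo F e = Vx b"
  shows "dpath F v (es @ [e]) b"
  unfolding dpath_def
proof (intro conjI allI impI)
  show "es @ [e] \<noteq> []" by simp
  show "set (es @ [e]) \<subseteq> E F" using assms unfolding dpath_def by auto
  show "up F (hd (es @ [e])) = Vx v" using assms unfolding dpath_def by auto
  show "lo F (last (es @ [e])) = Vx b" using assms by simp
  fix i assume i: "Suc i < length (es @ [e])"
  show "lo F ((es @ [e]) ! i) = up F ((es @ [e]) ! Suc i)"
  proof (cases "Suc i < length es")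
    case True then show ?thesis using assms(1) unfolding dpath_def by (simp add: nth_append)
  next
    case False
    then have "i = length es - 1" "es \<noteq> []" using i assms(1) unfolding dpath_def by auto
    moreover have "lo F (last es) = Vx u" using assms(1) unfolding dpath_def by blast
    ultimately show ?thesis using assms(3) by (simp add: nth_append last_conv_nth)
  qed
qed

lemma dpath_cons:
  assumes "dpath F u es v" "e \<in> E F" "up F e = Vx b" "lo F e = Vx u"
  shows "dpath F b (e # es) v"
  unfolding dpath_def
proof (intro conjI allI impI)
  show "e # es \<noteq> []" by simp
  show "set (e # es) \<subseteq> E F" using assms unfolding dpath_def by auto
  show "up F (hd (e # es)) = Vx b" using assms by simp
  show "lo F (last (e # es)) = Vx v" using assms unfolding dpath_def by auto
  fix i assume i: "Suc i < length (e # es)"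
  show "lo F ((e # es) ! i) = up F ((e # es) ! Suc i)"
  proof (cases i)
    case 0
    have "es \<noteq> []" "up F (hd es) = Vx u" using assms(1) unfolding dpath_def by blast+
    then show ?thesis using 0 assms(4) by (simp add: hd_conv_nth)
  next
    case (Suc j) then show ?thesis using assms(1) i unfolding dpath_def by simp
  qed
qed

lemma aipath_ne: "aipath F v es v' \<Longrightarrow> es \<noteq> []"
  by (induction rule: aipath.induct) (auto simp: dpath_def)

lemma ext_down:
  "aipath F v xs u \<Longrightarrow> lo F (last xs) = Vx u \<Longrightarrow> up F (last xs) \<noteq> Vx u \<Longrightarrow> e \<in> E F \<Longrightarrow> up F e = Vx u
   \<Longrightarrow> lo F e = Vx b \<Longrightarrow> aipath F v (xs @ [e]) b"
proof (induction arbitrary: b rule: aipath.induct)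
  case (fwd v es v')
  then show ?case using dpath_snoc aipath.fwd by metis
next
  case (bwd v' es v)
  then have "es \<noteq> []" "up F (hd es) = Vx v'" unfolding dpath_def by auto
  then show ?case using bwd by (simp add: last_rev)
next
  case (join v xs w ys v')
  have "ys \<noteq> []" using aipath_ne[OF join.hyps(2)] .
  then have "aipath F w (ys @ [e]) b" using join by simp
  moreover have "last xs \<noteq> hd (ys @ [e])" using join.hyps(5) \<open>ys \<noteq> []\<close> by simp
  ultimately show ?case using aipath.join[OF join.hyps(1) _ join.hyps(3,4)] by fastforce
qed

lemma ext_up:
  "aipath F v xs u \<Longrightarrow> up F (last xs) = Vx u \<Longrightarrow> lo F (last xs) \<noteq> Vx u \<Longrightarrow> e \<in> E F \<Longrightarrow> lo F e = Vx u
   \<Longrightarrow> up F e = Vx b \<Longrightarrow> aipath F v (xs @ [e]) b"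
proof (induction arbitrary: b rule: aipath.induct)
  case (fwd v es v')
  then show ?case unfolding dpath_def by auto
next
  case (bwd v' es v)
  have "dpath F b (e # es) v" using dpath_cons[OF bwd.hyps] bwd.prems by blast
  from aipath.bwd[OF this] show ?case by simp
next
  case (join v xs w ys v')
  have "ys \<noteq> []" using aipath_ne[OF join.hyps(2)] .
  then have "aipath F w (ys @ [e]) b" using join by simp
  moreover have "last xs \<noteq> hd (ys @ [e])" using join.hyps(5) \<open>ys \<noteq> []\<close> by simp
  ultimately show ?case using aipath.join[OF join.hyps(1) _ join.hyps(3,4)] by fastforce
qed



lemma atomic_finV: "atomic_flow A \<Longrightarrow> finite (V A)" unfolding atomic_flow_def by blast
lemma atomic_fin: "atomic_flow A \<Longrightarrow> finite (E A)" unfolding atomic_flow_def by blast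
lemma atomic_up: "atomic_flow A \<Longrightarrow> e \<in> E A \<Longrightarrow> up A e \<in> Vx ` V A \<union> {Top}" unfolding atomic_flow_def by blast
lemma atomic_lo: "atomic_flow A \<Longrightarrow> e \<in> E A \<Longrightarrow> lo A e \<in> Vx ` V A \<union> {Bot}" unfolding atomic_flow_def by blast
lemma atomic_cu: "atomic_flow A \<Longrightarrow> v \<in> V A \<Longrightarrow> card (upper_edges A v) = n_upper (lab A v)" unfolding atomic_flow_def by blast
lemma atomic_cl: "atomic_flow A \<Longrightarrow> v \<in> V A \<Longrightarrow> card (lower_edges A v) = n_lower (lab A v)" unfolding atomic_flow_def by blast
lemma atomic_nodc: "atomic_flow A \<Longrightarrow> dpath A v es v \<Longrightarrow> False" unfolding atomic_flow_def by blast
lemma atomic_pol: "atomic_flow A \<Longrightarrow> \<exists>\<pi>. pol A \<pi>" unfolding atomic_flow_def pol_def by blast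

lemma atomic_noloop: "atomic_flow A \<Longrightarrow> e \<in> E A \<Longrightarrow> up A e = Vx u \<Longrightarrow> lo A e = Vx u \<Longrightarrow> False"
  using atomic_nodc dpath_single by metis

lemma kind_up2: "n_upper k \<ge> 2 \<Longrightarrow> k \<in> {Cut, Contraction}" by (cases k) auto
lemma kind_lo2: "n_lower k \<ge> 2 \<Longrightarrow> k \<in> {Interaction, Cocontraction}" by (cases k) auto

lemma card2: "finite S \<Longrightarrow> x \<in> S \<Longrightarrow> y \<in> S \<Longrightarrow> x \<noteq> y \<Longrightarrow> card S \<ge> 2"
proof -
  assume a: "finite S" "x \<in> S" "y \<in> S" "x \<noteq> y"
  then have "card {x, y} \<le> card S" by (intro card_mono) auto
  then show ?thesis using a(4) by simp
qed

lemma awalk_aipath: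
  assumes A: "atomic_flow A" and P: "pol A \<pi>"
  shows "awalk A \<pi> a es b \<Longrightarrow> aipath A a es b"
proof (induction rule: awalk.induct)
  case (one e a b)
  show ?case
  proof (cases "\<pi> e")
    case True
    then have "e \<in> E A" "up A e = Vx a" "lo A e = Vx b" using one unfolding arc_def by auto
    from aipath.fwd[OF dpath_single[OF this]] show ?thesis .
  next
    case False
    then have "e \<in> E A" "up A e = Vx b" "lo A e = Vx a" using one unfolding arc_def by auto
    from aipath.bwd[OF dpath_single[OF this]] show ?thesis by simp
  qed
next
  case (snoc a es u e b)
  obtain x where ax: "arc A \<pi> (last es) x u" using awalk_last[OF snoc.hyps(1)] by blast
  have ne: "es \<noteq> []" using awalk_last[OF snoc.hyps(1)] by blast
  define e0 where "e0 = last es"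
  have a0: "arc A \<pi> e0 x u" using ax e0_def by simp
  have eE: "e \<in> E A" and e0E: "e0 \<in> E A" using a0 snoc.hyps(2) unfolding arc_def by auto
  have fin: "finite (E A)" using atomic_fin[OF A] .
  show ?case
  proof (cases "\<pi> e0")
    case T0: True
    then have h0: "up A e0 = Vx x" "lo A e0 = Vx u" using a0 unfolding arc_def by auto
    show ?thesis
    proof (cases "\<pi> e")
      case True
      then have h: "up A e = Vx u" "lo A e = Vx b" using snoc.hyps(2) unfolding arc_def by auto
      have "up A e0 \<noteq> Vx u" using atomic_noloop[OF A e0E] h0 by auto
      then show ?thesis using ext_down[OF snoc.IH _ _ eE h] h0 e0_def by simp
    next
      case False
      then have h: "lo A e = Vx u" "up A e = Vx b" using snoc.hyps(2) unfolding arc_def by auto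
      have uV: "u \<in> V A" using atomic_lo[OF A eE] h by auto
      have neq: "e0 \<noteq> e" using T0 False by auto
      have i1: "e0 \<in> upper_edges A u" "e \<in> upper_edges A u" using h h0 eE e0E unfolding upper_edges_def by auto
      have "card (upper_edges A u) \<ge> 2" by (rule card2[OF _ i1 neq]) (use fin in \<open>simp add: upper_edges_def\<close>)
      then have "lab A u \<in> {Cut, Contraction}" using atomic_cu[OF A uV] kind_up2 by simp
      moreover have "lab A u \<noteq> Contraction"
        using pol_cc[OF P uV, of e0 e] i1 T0 False by auto
      ultimately have lc: "lab A u \<in> {Interaction, Cut}" by auto
      have "aipath A u [e] b" using aipath.bwd[OF dpath_single[OF eE h(2) h(1)]] by simp
      from aipath.join[OF snoc.IH this uV lc] show ?thesis using neq e0_def by simp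
    qed
  next
    case F0: False
    then have h0: "lo A e0 = Vx x" "up A e0 = Vx u" using a0 unfolding arc_def by auto
    show ?thesis
    proof (cases "\<pi> e")
      case False
      then have h: "lo A e = Vx u" "up A e = Vx b" using snoc.hyps(2) unfolding arc_def by auto
      have "lo A e0 \<noteq> Vx u" using atomic_noloop[OF A e0E] h0 by auto
      then show ?thesis using ext_up[OF snoc.IH _ _ eE h] h0 e0_def by simp
    next
      case True
      then have h: "up A e = Vx u" "lo A e = Vx b" using snoc.hyps(2) unfolding arc_def by auto
      have uV: "u \<in> V A" using atomic_up[OF A eE] h by auto
      have neq: "e0 \<noteq> e" using F0 True by auto
      have i1: "e0 \<in> lower_edges A u" "e \<in> lower_edges A u" using h h0 eE e0E unfolding lower_edges_def by auto
      have "card (lower_edges A u) \<ge> 2" by (rule card2[OF _ i1 neq]) (use fin in \<open>simp add: lower_edges_def\<close>)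
      then have "lab A u \<in> {Interaction, Cocontraction}" using atomic_cl[OF A uV] kind_lo2 by simp
      moreover have "lab A u \<noteq> Cocontraction"
        using pol_cc[OF P uV, of e0 e] i1 F0 True by auto
      ultimately have lc: "lab A u \<in> {Interaction, Cut}" by auto
      have "aipath A u [e] b" using aipath.fwd[OF dpath_single[OF eE h(1) h(2)]] by simp
      from aipath.join[OF snoc.IH this uV lc] show ?thesis using neq e0_def by simp
    qed
  qed
qed

definition tailv :: "('v,'e) flow \<Rightarrow> ('e \<Rightarrow> bool) \<Rightarrow> 'e \<Rightarrow> 'v node" where
  "tailv F \<pi> e = (if \<pi> e then up F e else lo F e)"

lemma arc_tail: "arc F \<pi> e a b \<Longrightarrow> tailv F \<pi> e = Vx a"
  unfolding arc_def tailv_def by auto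

lemma path_walk:
  "rtrancl_path (\<lambda>a b. \<exists>e. arc F \<pi> e a b) x xs y \<Longrightarrow> distinct (x # xs) \<Longrightarrow> xs \<noteq> [] \<Longrightarrow>
   \<exists>es. awalk F \<pi> x es y \<and> distinct es \<and> (\<forall>e\<in>set es. tailv F \<pi> e \<in> Vx ` set (x # butlast xs))"
proof (induction rule: rtrancl_path.induct)
  case (base x)
  then show ?case by simp
next
  case (step x y ys z)
  obtain e0 where e0: "arc F \<pi> e0 x y" using step.hyps(1) by blast
  show ?case
  proof (cases "ys = []")
    case True
    then have "y = z" using step.hyps(2) by (auto elim: rtrancl_path.cases)
    then show ?thesis using e0 awalk.one[OF e0] arc_tail[OF e0] True by (intro exI[of _ "[e0]"]) auto
  next
    case False
    have "distinct (y # ys)" using step.prems by simp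
    from step.IH[OF this False] obtain es where es: "awalk F \<pi> y es z" "distinct es"
      "\<forall>e\<in>set es. tailv F \<pi> e \<in> Vx ` set (y # butlast ys)" by blast
    have xn: "x \<notin> set (y # butlast ys)" using step.prems(1) by (auto dest: in_set_butlastD)
    have "e0 \<notin> set es" using es(3) arc_tail[OF e0] xn by force
    moreover have "butlast (y # ys) = y # butlast ys" using False by simp
    ultimately show ?thesis using awalk_cons[OF es(1) e0] es(2,3) arc_tail[OF e0]
      by (intro exI[of _ "e0 # es"]) auto
  qed
qed

lemma A_struct:
  assumes A: "atomic_flow A" and C: "cycle_free A"
  shows "\<exists>\<pi> r. struct A \<pi> r"
proof -
  obtain \<pi> where P: "pol A \<pi>" using atomic_pol[OF A] by blast
  define R where "R = (\<lambda>a b. \<exists>e. arc A \<pi> e a b)"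
  have nocyc: "\<And>v es. awalk A \<pi> v es v \<Longrightarrow> distinct es \<Longrightarrow> False"
    using awalk_aipath[OF A P] C unfolding cycle_free_def ai_cycle_def by blast
  have irr: "\<not> R\<^sup>+\<^sup>+ v v" for v
  proof
    assume "R\<^sup>+\<^sup>+ v v"
    then obtain u where vu: "R v u" and uv: "R\<^sup>*\<^sup>* u v" using tranclpD by metis
    obtain e0 where e0: "arc A \<pi> e0 v u" using vu R_def by blast
    obtain xs where "rtrancl_path R u xs v" using uv rtranclp_eq_rtrancl_path by metis
    then obtain xs' where p: "rtrancl_path R u xs' v" "distinct (u # xs')"
      using rtrancl_path_distinct by metis
    show False
    proof (cases "xs' = []")
      case True
      then have "u = v" using p(1) by (auto elim: rtrancl_path.cases)
      then show False using nocyc awalk.one[OF e0] by fastforce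
    next
      case False
      from path_walk[OF p(1)[unfolded R_def] p(2) False] obtain es where
        es: "awalk A \<pi> u es v" "distinct es" "\<forall>e\<in>set es. tailv A \<pi> e \<in> Vx ` set (u # butlast xs')" by blast
      have "last xs' = v" using rtrancl_path_last[OF p(1) False] .
      then have "u # xs' = (u # butlast xs') @ [v]" using False append_butlast_last_id by (metis append_Cons)
      then have "distinct ((u # butlast xs') @ [v])" using p(2) by metis
      then have "v \<notin> set (u # butlast xs')" by (simp only: distinct_append) simp
      then have "e0 \<notin> set es" using es(3) arc_tail[OF e0] by force
      then show False using nocyc[OF awalk_cons[OF es(1) e0]] es(2) by simp
    qed
  qed
  define r where "r v = card {u. R\<^sup>+\<^sup>+ u v}" for v
  have finR: "finite {u. R\<^sup>+\<^sup>+ u v}" for v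
  proof (rule finite_subset[OF _ atomic_finV[OF A]])
    show "{u. R\<^sup>+\<^sup>+ u v} \<subseteq> V A"
    proof
      fix u assume "u \<in> {u. R\<^sup>+\<^sup>+ u v}"
      then obtain z where "R u z" using tranclpD by fastforce
      then obtain e where "arc A \<pi> e u z" using R_def by blast
      then show "u \<in> V A" unfolding arc_def using atomic_up[OF A] atomic_lo[OF A] by fastforce
    qed
  qed
  have rlt: "R a b \<Longrightarrow> r a < r b" for a b
  proof -
    assume ab: "R a b"
    have "{u. R\<^sup>+\<^sup>+ u a} \<subset> {u. R\<^sup>+\<^sup>+ u b}"
    proof
      show "{u. R\<^sup>+\<^sup>+ u a} \<subseteq> {u. R\<^sup>+\<^sup>+ u b}" using ab by (auto intro: tranclp.trancl_into_trancl)
      show "{u. R\<^sup>+\<^sup>+ u a} \<noteq> {u. R\<^sup>+\<^sup>+ u b}" using ab irr by auto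
    qed
    then show ?thesis unfolding r_def using psubset_card_mono[OF finR] by blast
  qed
  have "struct A \<pi> r" unfolding struct_def
  proof (intro conjI ballI allI impI)
    show "finite (E A)" using atomic_fin[OF A] .
    fix e assume "e \<in> E A"
    then show "up A e \<in> Vx ` V A \<union> {Top}" "lo A e \<in> Vx ` V A \<union> {Bot}" using atomic_up[OF A] atomic_lo[OF A] by auto
  next
    fix v assume "v \<in> V A"
    then show "card (upper_edges A v) \<le> n_upper (lab A v)" "card (lower_edges A v) \<le> n_lower (lab A v)"
      using atomic_cu[OF A] atomic_cl[OF A] by auto
  next
    show "pol A \<pi>" using P .
  next
    fix e a b assume "e \<in> E A" "up A e = Vx a" "lo A e = Vx b"
    then have "\<pi> e \<Longrightarrow> R a b" "\<not> \<pi> e \<Longrightarrow> R b a" unfolding R_def arc_def by auto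
    then show "\<pi> e \<Longrightarrow> r a < r b" "\<not> \<pi> e \<Longrightarrow> r b < r a" using rlt by auto
  qed
  then show ?thesis by blast
qed



lemma structI:
  assumes "finite (E F)"
    and "\<And>e. e \<in> E F \<Longrightarrow> up F e \<in> Vx ` V F \<union> {Top}"
    and "\<And>e. e \<in> E F \<Longrightarrow> lo F e \<in> Vx ` V F \<union> {Bot}"
    and "\<And>v. v \<in> V F \<Longrightarrow> card (upper_edges F v) \<le> n_upper (lab F v)"
    and "\<And>v. v \<in> V F \<Longrightarrow> card (lower_edges F v) \<le> n_lower (lab F v)"
    and "\<And>v e e'. v \<in> V F \<Longrightarrow> lab F v \<in> {Contraction, Cocontraction} \<Longrightarrow> e \<in> upper_edges F v \<union> lower_edges F v
          \<Longrightarrow> e' \<in> upper_edges F v \<union> lower_edges F v \<Longrightarrow> \<pi> e = \<pi> e'"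
    and "\<And>v e e'. v \<in> V F \<Longrightarrow> lab F v \<in> {Interaction, Cut} \<Longrightarrow> e \<in> upper_edges F v \<union> lower_edges F v
          \<Longrightarrow> e' \<in> upper_edges F v \<union> lower_edges F v \<Longrightarrow> e \<noteq> e' \<Longrightarrow> \<pi> e \<noteq> \<pi> e'"
    and "\<And>e a b. e \<in> E F \<Longrightarrow> up F e = Vx a \<Longrightarrow> lo F e = Vx b \<Longrightarrow> \<pi> e \<Longrightarrow> r a < r b"
    and "\<And>e a b. e \<in> E F \<Longrightarrow> up F e = Vx a \<Longrightarrow> lo F e = Vx b \<Longrightarrow> \<not> \<pi> e \<Longrightarrow> r b < r a"
  shows "struct F \<pi> r"
  unfolding struct_def pol_def using assms by blast

lemma card_sub_le: "finite T \<Longrightarrow> S \<subseteq> T \<Longrightarrow> card T \<le> n \<Longrightarrow> card S \<le> n"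
  using card_mono le_trans by blast

lemma card_le2: "card {a, b} \<le> 2" by (simp add: card_insert_if)
lemma card_le1: "card {a} \<le> 1" by simp

lemma exact2: "finite T \<Longrightarrow> a \<in> T \<Longrightarrow> b \<in> T \<Longrightarrow> a \<noteq> b \<Longrightarrow> card T \<le> 2 \<Longrightarrow> T = {a, b}"
proof -
  assume a: "finite T" "a \<in> T" "b \<in> T" "a \<noteq> b" "card T \<le> 2"
  have "{a, b} = T" by (rule card_seteq) (use a in auto)
  then show ?thesis by simp
qed
lemma exact1: "finite T \<Longrightarrow> a \<in> T \<Longrightarrow> card T \<le> 1 \<Longrightarrow> T = {a}"
proof -
  assume a: "finite T" "a \<in> T" "card T \<le> 1"
  have "{a} = T" by (rule card_seteq) (use a in auto)
  then show ?thesis by simp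
qed
lemma exact0: "finite T \<Longrightarrow> card T \<le> 0 \<Longrightarrow> T = {}"
  by simp

lemma fin_ul: "finite (E F) \<Longrightarrow> finite (upper_edges F v)" "finite (E F) \<Longrightarrow> finite (lower_edges F v)"
  unfolding upper_edges_def lower_edges_def by auto



lemma c1_pres:
  assumes S: "struct A \<pi> r" and st: "step_c1 A B"
  shows "\<exists>\<pi>' r'. struct B \<pi>' r'"
proof -
  obtain nu mu ep e1 e2 e3 ka c1 c2 d1 d2 where H:
    "nu \<in> V A \<and> mu \<in> V A \<and> lab A nu = Contraction \<and> lab A mu = Cut
     \<and> {ep, e1, e2, e3} \<subseteq> E A \<and> e1 \<noteq> e2 \<and> e3 \<noteq> ep
     \<and> lo A e1 = Vx nu \<and> lo A e2 = Vx nu \<and> up A ep = Vx nu \<and> lo A ep = Vx mu \<and> lo A e3 = Vx mu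
     \<and> ka \<notin> V A \<and> c1 \<notin> V A \<and> c2 \<notin> V A \<and> distinct [ka, c1, c2]
     \<and> d1 \<notin> E A \<and> d2 \<notin> E A \<and> d1 \<noteq> d2
     \<and> is_flow_on B (V A - {nu, mu} \<union> {ka, c1, c2}) (E A - {ep} \<union> {d1, d2})
         ((lab A)(ka := Cocontraction, c1 := Cut, c2 := Cut))
         ((up A)(d1 := Vx ka, d2 := Vx ka))
         ((lo A)(e3 := Vx ka, e1 := Vx c1, d1 := Vx c1, e2 := Vx c2, d2 := Vx c2))"
    using st unfolding step_c1_def by (elim exE) (rule that, assumption)
  have nuV: "nu \<in> V A" and muV: "mu \<in> V A" and labnu: "lab A nu = Contraction" and labmu: "lab A mu = Cut"
    and Es: "{ep, e1, e2, e3} \<subseteq> E A" and e12: "e1 \<noteq> e2" and e3ep: "e3 \<noteq> ep"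
    and lo1: "lo A e1 = Vx nu" and lo2: "lo A e2 = Vx nu" and upep: "up A ep = Vx nu" and loep: "lo A ep = Vx mu"
    and lo3: "lo A e3 = Vx mu"
    and kaV: "ka \<notin> V A" and c1V: "c1 \<notin> V A" and c2V: "c2 \<notin> V A" and dis: "distinct [ka, c1, c2]"
    and d1E: "d1 \<notin> E A" and d2E: "d2 \<notin> E A" and d12: "d1 \<noteq> d2"
    and VB: "V B = V A - {nu, mu} \<union> {ka, c1, c2}" and EB: "E B = E A - {ep} \<union> {d1, d2}"
    and labB: "\<forall>v \<in> V A - {nu, mu} \<union> {ka, c1, c2}. lab B v = ((lab A)(ka := Cocontraction, c1 := Cut, c2 := Cut)) v"
    and ulB: "\<forall>e \<in> E A - {ep} \<union> {d1, d2}. up B e = ((up A)(d1 := Vx ka, d2 := Vx ka)) e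
              \<and> lo B e = ((lo A)(e3 := Vx ka, e1 := Vx c1, d1 := Vx c1, e2 := Vx c2, d2 := Vx c2)) e"
    using H unfolding is_flow_on_def by blast+
  have epE: "ep \<in> E A" and e1E: "e1 \<in> E A" and e2E: "e2 \<in> E A" and e3E: "e3 \<in> E A" using Es by auto
  have fin: "finite (E A)" using struct_fin[OF S] .
  have numu: "nu \<noteq> mu" using labnu labmu by auto
  have ne: "e1 \<noteq> ep" "e2 \<noteq> ep" "e1 \<noteq> e3" "e2 \<noteq> e3" using lo1 lo2 loep lo3 numu by auto
  have dne: "d1 \<noteq> ep" "d1 \<noteq> e1" "d1 \<noteq> e2" "d1 \<noteq> e3" "d2 \<noteq> ep" "d2 \<noteq> e1" "d2 \<noteq> e2" "d2 \<noteq> e3"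
    using d1E d2E epE e1E e2E e3E by auto
  note dist = ne dne e12 d12 e3ep ne[THEN not_sym] dne[THEN not_sym] e12[THEN not_sym] d12[THEN not_sym] e3ep[THEN not_sym]
  have vne: "ka \<noteq> c1" "ka \<noteq> c2" "c1 \<noteq> c2" "c1 \<noteq> ka" "c2 \<noteq> ka" "c2 \<noteq> c1" using dis by auto
  have fresh: "\<And>x. x \<in> V A \<Longrightarrow> x \<noteq> ka \<and> x \<noteq> c1 \<and> x \<noteq> c2" using kaV c1V c2V by auto
  have upA: "\<And>e. e \<in> E A \<Longrightarrow> up A e \<in> Vx ` V A \<union> {Top}" using struct_up[OF S] .
  have loA: "\<And>e. e \<in> E A \<Longrightarrow> lo A e \<in> Vx ` V A \<union> {Bot}" using struct_lo[OF S] .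
  have fr_up: "\<And>e x. e \<in> E A \<Longrightarrow> up A e = Vx x \<Longrightarrow> x \<in> V A" using upA by force
  have fr_lo: "\<And>e x. e \<in> E A \<Longrightarrow> lo A e = Vx x \<Longrightarrow> x \<in> V A" using loA by force
  have U_nu: "upper_edges A nu = {e1, e2}"
    by (rule exact2[OF fin_ul(1)[OF fin]]) (use e1E e2E lo1 lo2 e12 struct_cu[OF S nuV] labnu in \<open>auto simp: upper_edges_def\<close>)
  have L_nu: "lower_edges A nu = {ep}"
    by (rule exact1[OF fin_ul(2)[OF fin]]) (use epE upep struct_cl[OF S nuV] labnu in \<open>auto simp: lower_edges_def\<close>)
  have U_mu: "upper_edges A mu = {ep, e3}"
    by (rule exact2[OF fin_ul(1)[OF fin]]) (use epE e3E loep lo3 e3ep struct_cu[OF S muV] labmu in \<open>auto simp: upper_edges_def\<close>)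
  have L_mu: "lower_edges A mu = {}"
    by (rule exact0[OF fin_ul(2)[OF fin]]) (use struct_cl[OF S muV] labmu in auto)
  have inc_lo_nu: "\<And>e. e \<in> E A \<Longrightarrow> lo A e = Vx nu \<Longrightarrow> e = e1 \<or> e = e2" using U_nu unfolding upper_edges_def by blast
  have inc_up_nu: "\<And>e. e \<in> E A \<Longrightarrow> up A e = Vx nu \<Longrightarrow> e = ep" using L_nu unfolding lower_edges_def by blast
  have inc_lo_mu: "\<And>e. e \<in> E A \<Longrightarrow> lo A e = Vx mu \<Longrightarrow> e = ep \<or> e = e3" using U_mu unfolding upper_edges_def by blast
  have inc_up_mu: "\<And>e. e \<in> E A \<Longrightarrow> up A e \<noteq> Vx mu" using L_mu unfolding lower_edges_def by blast
  define s where "s = \<pi> ep"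
  have P: "pol A \<pi>" using struct_pol[OF S] .
  have s1: "\<pi> e1 = s" using pol_cc[OF P nuV, of e1 ep] labnu U_nu L_nu s_def by auto
  have s2: "\<pi> e2 = s" using pol_cc[OF P nuV, of e2 ep] labnu U_nu L_nu s_def by auto
  have s3: "\<pi> e3 = (\<not> s)" using pol_ic[OF P muV, of e3 ep] labmu U_mu e3ep s_def by auto
  have rk: "(s \<longrightarrow> r nu < r mu) \<and> (\<not> s \<longrightarrow> r mu < r nu)" using struct_rank[OF S epE upep loep] s_def by simp
  have EB': "\<And>e. e \<in> E B \<longleftrightarrow> (e \<in> E A \<and> e \<noteq> ep) \<or> e = d1 \<or> e = d2" using EB by auto
  have upB: "up B e = (if e = d1 \<or> e = d2 then Vx ka else up A e)" if eB: "e \<in> E B" for e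
  proof -
    have "e \<in> E A - {ep} \<union> {d1, d2}" using EB eB by simp
    then have "up B e = ((up A)(d1 := Vx ka, d2 := Vx ka)) e" using ulB by blast
    then show ?thesis by simp
  qed
  have loB: "lo B e = (if e = e3 then Vx ka else if e = e1 \<or> e = d1 then Vx c1
      else if e = e2 \<or> e = d2 then Vx c2 else lo A e)" if eB: "e \<in> E B" for e
  proof -
    have "e \<in> E A - {ep} \<union> {d1, d2}" using EB eB by simp
    then have "lo B e = ((lo A)(e3 := Vx ka, e1 := Vx c1, d1 := Vx c1, e2 := Vx c2, d2 := Vx c2)) e" using ulB by blast
    then show ?thesis using ne dne e12 d12 by simp
  qed
  have labB': "lab B v = (if v = ka then Cocontraction else if v = c1 \<or> v = c2 then Cut else lab A v)" if vB: "v \<in> V B" for v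
  proof -
    have "v \<in> V A - {nu, mu} \<union> {ka, c1, c2}" using VB vB by simp
    then have "lab B v = ((lab A)(ka := Cocontraction, c1 := Cut, c2 := Cut)) v" using labB by blast
    then show ?thesis using vne by auto
  qed
  define \<pi>' where "\<pi>' = \<pi>(d1 := (\<not> s), d2 := (\<not> s))"
  define r' where "r' = r(ka := r mu, c1 := r nu, c2 := r nu)"
  have pi_old: "\<And>e. e \<in> E A \<Longrightarrow> \<pi>' e = \<pi> e" using \<pi>'_def d1E d2E by auto
  have r_old: "\<And>x. x \<in> V A \<Longrightarrow> r' x = r x" using r'_def fresh by auto
  have UB_old: "\<And>v. v \<in> V A \<Longrightarrow> upper_edges B v \<subseteq> upper_edges A v"
  proof
    fix v e assume v: "v \<in> V A" and e: "e \<in> upper_edges B v"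
    then have eB: "e \<in> E B" and l: "lo B e = Vx v" unfolding upper_edges_def by auto
    show "e \<in> upper_edges A v"
    proof (cases "e = e3 \<or> e = e1 \<or> e = d1 \<or> e = e2 \<or> e = d2")
      case True then show ?thesis using loB[OF eB] l fresh[OF v] dist by auto
    next
      case False then show ?thesis using loB[OF eB] l EB' eB unfolding upper_edges_def by auto
    qed
  qed
  have LB_old: "\<And>v. v \<in> V A \<Longrightarrow> lower_edges B v \<subseteq> lower_edges A v"
  proof
    fix v e assume v: "v \<in> V A" and e: "e \<in> lower_edges B v"
    then have eB: "e \<in> E B" and l: "up B e = Vx v" unfolding lower_edges_def by auto
    show "e \<in> lower_edges A v"
    proof (cases "e = d1 \<or> e = d2")
      case True then show ?thesis using upB[OF eB] l fresh[OF v] by auto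
    next
      case False then show ?thesis using upB[OF eB] l EB' eB unfolding lower_edges_def by auto
    qed
  qed
  have up_new: "\<And>e. e \<in> E B \<Longrightarrow> up B e = Vx ka \<Longrightarrow> e = d1 \<or> e = d2"
    using upB EB' fr_up kaV by (metis node.inject)
  have up_new1: "\<And>e x. e \<in> E B \<Longrightarrow> up B e = Vx x \<Longrightarrow> x = c1 \<or> x = c2 \<Longrightarrow> False"
    using upB EB' fr_up c1V c2V vne by (metis node.inject)
  have lo_ka: "\<And>e. e \<in> E B \<Longrightarrow> lo B e = Vx ka \<Longrightarrow> e = e3"
  proof -
    fix e assume e: "e \<in> E B" "lo B e = Vx ka"
    show "e = e3"
    proof (rule ccontr)
      assume "e \<noteq> e3"
      then show False using loB[OF e(1)] e(2) vne EB' e(1) fr_lo kaV by (auto split: if_splits)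
    qed
  qed
  have lo_c1: "\<And>e. e \<in> E B \<Longrightarrow> lo B e = Vx c1 \<Longrightarrow> e = e1 \<or> e = d1"
  proof -
    fix e assume e: "e \<in> E B" "lo B e = Vx c1"
    show "e = e1 \<or> e = d1"
    proof (rule ccontr)
      assume "\<not> (e = e1 \<or> e = d1)"
      then show False using loB[OF e(1)] e(2) vne EB' e(1) fr_lo c1V by (auto split: if_splits)
    qed
  qed
  have lo_c2: "\<And>e. e \<in> E B \<Longrightarrow> lo B e = Vx c2 \<Longrightarrow> e = e2 \<or> e = d2"
  proof -
    fix e assume e: "e \<in> E B" "lo B e = Vx c2"
    show "e = e2 \<or> e = d2"
    proof (rule ccontr)
      assume "\<not> (e = e2 \<or> e = d2)"
      then show False using loB[OF e(1)] e(2) vne EB' e(1) fr_lo c2V by (auto split: if_splits)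
    qed
  qed
  have inc_ka: "upper_edges B ka \<union> lower_edges B ka \<subseteq> {e3, d1, d2}"
    using lo_ka up_new unfolding upper_edges_def lower_edges_def by blast
  have inc_c1: "upper_edges B c1 \<union> lower_edges B c1 \<subseteq> {e1, d1}"
    using lo_c1 up_new1 unfolding upper_edges_def lower_edges_def by blast
  have inc_c2: "upper_edges B c2 \<union> lower_edges B c2 \<subseteq> {e2, d2}"
    using lo_c2 up_new1 unfolding upper_edges_def lower_edges_def by blast
  have finB: "finite (E B)" using fin EB by simp
  have oldV: "\<And>v. v \<in> V B \<Longrightarrow> v \<noteq> ka \<Longrightarrow> v \<noteq> c1 \<Longrightarrow> v \<noteq> c2 \<Longrightarrow> v \<in> V A \<and> v \<noteq> nu \<and> v \<noteq> mu"
    using VB by auto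
  have "struct B \<pi>' r'"
  proof (rule structI)
    show "finite (E B)" using finB .
  next
    fix e assume eB: "e \<in> E B"
    show "up B e \<in> Vx ` V B \<union> {Top}"
    proof (cases "e = d1 \<or> e = d2")
      case True then show ?thesis using upB[OF eB] VB by auto
    next
      case False
      then have eA: "e \<in> E A" "e \<noteq> ep" using EB' eB by auto
      have u: "up B e = up A e" using upB[OF eB] False by simp
      show ?thesis
      proof (cases "up A e")
        case (Vx x)
        then have "x \<in> V A" using fr_up eA by blast
        moreover have "x \<noteq> nu" using inc_up_nu[OF eA(1)] Vx eA(2) by auto
        moreover have "x \<noteq> mu" using inc_up_mu[OF eA(1)] Vx by auto
        ultimately show ?thesis using u Vx VB by auto
      qed (use u upA[OF eA(1)] in auto)
    qed
  next
    fix e assume eB: "e \<in> E B"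
    show "lo B e \<in> Vx ` V B \<union> {Bot}"
    proof (cases "e = e3 \<or> e = e1 \<or> e = d1 \<or> e = e2 \<or> e = d2")
      case True then show ?thesis using loB[OF eB] VB by auto
    next
      case False
      then have eA: "e \<in> E A" "e \<noteq> ep" using EB' eB by auto
      have u: "lo B e = lo A e" using loB[OF eB] False by simp
      show ?thesis
      proof (cases "lo A e")
        case (Vx x)
        then have "x \<in> V A" using fr_lo eA by blast
        moreover have "x \<noteq> nu" using inc_lo_nu[OF eA(1)] Vx False by auto
        moreover have "x \<noteq> mu" using inc_lo_mu[OF eA(1)] Vx eA(2) False by auto
        ultimately show ?thesis using u Vx VB by auto
      qed (use u loA[OF eA(1)] in auto)
    qed
  next
    fix v assume vB: "v \<in> V B"
    show "card (upper_edges B v) \<le> n_upper (lab B v)"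
    proof (cases "v = ka \<or> v = c1 \<or> v = c2")
      case True
      then show ?thesis
      proof (elim disjE)
        assume v: "v = ka"
        have "card (upper_edges B v) \<le> card {e3}" using lo_ka v unfolding upper_edges_def by (intro card_mono) auto
        then show ?thesis using labB'[OF vB] v by simp
      next
        assume v: "v = c1"
        have "card (upper_edges B v) \<le> card {e1, d1}" using inc_c1 v by (intro card_mono) auto
        then show ?thesis using labB'[OF vB] v vne card_le2[of e1 d1] by simp
      next
        assume v: "v = c2"
        have "card (upper_edges B v) \<le> card {e2, d2}" using inc_c2 v by (intro card_mono) auto
        then show ?thesis using labB'[OF vB] v vne card_le2[of e2 d2] by simp
      qed
    next
      case False
      then have o: "v \<in> V A" using oldV[OF vB] by auto
      have "card (upper_edges B v) \<le> card (upper_edges A v)" using UB_old[OF o] fin_ul[OF fin] by (intro card_mono) auto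
      then show ?thesis using struct_cu[OF S o] labB'[OF vB] False by simp
    qed
  next
    fix v assume vB: "v \<in> V B"
    show "card (lower_edges B v) \<le> n_lower (lab B v)"
    proof (cases "v = ka \<or> v = c1 \<or> v = c2")
      case True
      then show ?thesis
      proof (elim disjE)
        assume v: "v = ka"
        have "card (lower_edges B v) \<le> card {d1, d2}" using up_new v unfolding lower_edges_def by (intro card_mono) auto
        then show ?thesis using labB'[OF vB] v card_le2[of d1 d2] by simp
      next
        assume v: "v = c1"
        have "lower_edges B v = {}" using up_new1 v unfolding lower_edges_def by blast
        then show ?thesis by simp
      next
        assume v: "v = c2"
        have "lower_edges B v = {}" using up_new1 v unfolding lower_edges_def by blast
        then show ?thesis by simp
      qed
    next
      case False
      then have o: "v \<in> V A" using oldV[OF vB] by auto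
      have "card (lower_edges B v) \<le> card (lower_edges A v)" using LB_old[OF o] fin_ul[OF fin] by (intro card_mono) auto
      then show ?thesis using struct_cl[OF S o] labB'[OF vB] False by simp
    qed
  next
    fix v e e' assume vB: "v \<in> V B" and lv: "lab B v \<in> {Contraction, Cocontraction}"
      and e: "e \<in> upper_edges B v \<union> lower_edges B v" and e': "e' \<in> upper_edges B v \<union> lower_edges B v"
    show "\<pi>' e = \<pi>' e'"
    proof (cases "v = ka \<or> v = c1 \<or> v = c2")
      case True
      then have "v = ka" using lv labB'[OF vB] vne by auto
      then have "e \<in> {e3, d1, d2}" "e' \<in> {e3, d1, d2}" using inc_ka e e' by auto
      then show ?thesis using s3 ne dne d12 \<pi>'_def by auto
    next
      case False
      then have o: "v \<in> V A" using oldV[OF vB] by auto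
      have ee: "e \<in> upper_edges A v \<union> lower_edges A v" "e' \<in> upper_edges A v \<union> lower_edges A v"
        using UB_old[OF o] LB_old[OF o] e e' by auto
      then have "e \<in> E A" "e' \<in> E A" unfolding upper_edges_def lower_edges_def by auto
      then show ?thesis using pol_cc[OF P o _ ee] lv labB'[OF vB] False pi_old by auto
    qed
  next
    fix v e e' assume vB: "v \<in> V B" and lv: "lab B v \<in> {Interaction, Cut}"
      and e: "e \<in> upper_edges B v \<union> lower_edges B v" and e': "e' \<in> upper_edges B v \<union> lower_edges B v"
      and nee: "e \<noteq> e'"
    show "\<pi>' e \<noteq> \<pi>' e'"
    proof (cases "v = ka \<or> v = c1 \<or> v = c2")
      case True
      then have "v = c1 \<or> v = c2" using lv labB'[OF vB] vne by auto
      then show ?thesis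
      proof
        assume "v = c1"
        then have "e \<in> {e1, d1}" "e' \<in> {e1, d1}" using inc_c1 e e' by auto
        then show ?thesis using nee s1 dne \<pi>'_def by auto
      next
        assume "v = c2"
        then have "e \<in> {e2, d2}" "e' \<in> {e2, d2}" using inc_c2 e e' by auto
        then show ?thesis using nee s2 dne \<pi>'_def by auto
      qed
    next
      case False
      then have o: "v \<in> V A" using oldV[OF vB] by auto
      have ee: "e \<in> upper_edges A v \<union> lower_edges A v" "e' \<in> upper_edges A v \<union> lower_edges A v"
        using UB_old[OF o] LB_old[OF o] e e' by auto
      then have "e \<in> E A" "e' \<in> E A" unfolding upper_edges_def lower_edges_def by auto
      then show ?thesis using pol_ic[OF P o _ ee nee] lv labB'[OF vB] False pi_old by auto
    qed
  next
    fix e a b assume eB: "e \<in> E B" and ua: "up B e = Vx a" and lb: "lo B e = Vx b"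
    have "(\<pi>' e \<longrightarrow> r' a < r' b) \<and> (\<not> \<pi>' e \<longrightarrow> r' b < r' a)"
    proof (cases "e = d1 \<or> e = d2")
      case True
      then have "a = ka" "b = c1 \<or> b = c2" "\<pi>' e = (\<not> s)"
        using upB[OF eB] loB[OF eB] ua lb dne d12 \<pi>'_def by (auto split: if_splits)
      then show ?thesis using rk r'_def vne by auto
    next
      case False
      then have eA: "e \<in> E A" "e \<noteq> ep" using EB' eB by auto
      have uA: "up A e = Vx a" using upB[OF eB] ua False by simp
      have aV: "a \<in> V A" using fr_up[OF eA(1) uA] .
      have pe: "\<pi>' e = \<pi> e" using pi_old[OF eA(1)] .
      show ?thesis
      proof (cases "e = e3 \<or> e = e1 \<or> e = e2")
        case True
        then show ?thesis
        proof (elim disjE)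
          assume ee: "e = e3"
          then have "b = ka" using loB[OF eB] lb by simp
          then show ?thesis using struct_rank[OF S e3E, of a mu] uA ee lo3 pe r_old[OF aV] r'_def vne by auto
        next
          assume ee: "e = e1"
          then have "b = c1" using loB[OF eB] lb dist by simp
          then show ?thesis using struct_rank[OF S e1E, of a nu] uA ee lo1 pe r_old[OF aV] r'_def vne by auto
        next
          assume ee: "e = e2"
          then have "b = c2" using loB[OF eB] lb dist by simp
          then show ?thesis using struct_rank[OF S e2E, of a nu] uA ee lo2 pe r_old[OF aV] r'_def vne by auto
        qed
      next
        case F2: False
        then have lA: "lo A e = Vx b" using loB[OF eB] lb False by simp
        have bV: "b \<in> V A" using fr_lo[OF eA(1) lA] .
        show ?thesis using struct_rank[OF S eA(1) uA lA] pe r_old[OF aV] r_old[OF bV] by simp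
      qed
    qed
    then show "\<pi>' e \<Longrightarrow> r' a < r' b" "\<not> \<pi>' e \<Longrightarrow> r' b < r' a" by auto
  qed
  then show ?thesis by blast
qed
lemma c2_pres:
  assumes S: "struct A \<pi> r" and st: "step_c2 A B"
  shows "\<exists>\<pi>' r'. struct B \<pi>' r'"
proof -
  obtain io ka e1 e2 e3 e4 ga i1 i2 d1 d2 where H:
    "io \<in> V A \<and> ka \<in> V A \<and> lab A io = Interaction \<and> lab A ka = Cocontraction
     \<and> {e1, e2, e3, e4} \<subseteq> E A \<and> e1 \<noteq> e2 \<and> e3 \<noteq> e4
     \<and> up A e3 = Vx io \<and> up A e4 = Vx io \<and> lo A e4 = Vx ka \<and> up A e1 = Vx ka \<and> up A e2 = Vx ka
     \<and> ga \<notin> V A \<and> i1 \<notin> V A \<and> i2 \<notin> V A \<and> distinct [ga, i1, i2]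
     \<and> d1 \<notin> E A \<and> d2 \<notin> E A \<and> d1 \<noteq> d2
     \<and> is_flow_on B (V A - {io, ka} \<union> {ga, i1, i2}) (E A - {e4} \<union> {d1, d2})
         ((lab A)(ga := Contraction, i1 := Interaction, i2 := Interaction))
         ((up A)(e3 := Vx ga, e1 := Vx i1, d1 := Vx i1, e2 := Vx i2, d2 := Vx i2))
         ((lo A)(d1 := Vx ga, d2 := Vx ga))"
    using st unfolding step_c2_def by (elim exE) (rule that, assumption)
  have kaV: "ka \<in> V A" and ioV: "io \<in> V A" and labnu: "lab A ka = Cocontraction" and labmu: "lab A io = Interaction"
    and Es: "{e1, e2, e3, e4} \<subseteq> E A" and e12: "e1 \<noteq> e2" and e3ep: "e3 \<noteq> e4"
    and lo1: "up A e1 = Vx ka" and lo2: "up A e2 = Vx ka" and upep: "lo A e4 = Vx ka" and loep: "up A e4 = Vx io"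
    and lo3: "up A e3 = Vx io"
    and gaV: "ga \<notin> V A" and i1V: "i1 \<notin> V A" and i2V: "i2 \<notin> V A" and dis: "distinct [ga, i1, i2]"
    and d1E: "d1 \<notin> E A" and d2E: "d2 \<notin> E A" and d12: "d1 \<noteq> d2"
    and VB: "V B = V A - {io, ka} \<union> {ga, i1, i2}" and EB: "E B = E A - {e4} \<union> {d1, d2}"
    and labB: "\<forall>v \<in> V A - {io, ka} \<union> {ga, i1, i2}. lab B v = ((lab A)(ga := Contraction, i1 := Interaction, i2 := Interaction)) v"
    and ulB: "\<forall>e \<in> E A - {e4} \<union> {d1, d2}. lo B e = ((lo A)(d1 := Vx ga, d2 := Vx ga)) e
              \<and> up B e = ((up A)(e3 := Vx ga, e1 := Vx i1, d1 := Vx i1, e2 := Vx i2, d2 := Vx i2)) e"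
    using H unfolding is_flow_on_def by blast+
  have e4E: "e4 \<in> E A" and e1E: "e1 \<in> E A" and e2E: "e2 \<in> E A" and e3E: "e3 \<in> E A" using Es by auto
  have fin: "finite (E A)" using struct_fin[OF S] .
  have numu: "ka \<noteq> io" using labnu labmu by auto
  have ne: "e1 \<noteq> e4" "e2 \<noteq> e4" "e1 \<noteq> e3" "e2 \<noteq> e3" using lo1 lo2 loep lo3 numu by auto
  have dne: "d1 \<noteq> e4" "d1 \<noteq> e1" "d1 \<noteq> e2" "d1 \<noteq> e3" "d2 \<noteq> e4" "d2 \<noteq> e1" "d2 \<noteq> e2" "d2 \<noteq> e3"
    using d1E d2E e4E e1E e2E e3E by auto
  note dist = ne dne e12 d12 e3ep ne[THEN not_sym] dne[THEN not_sym] e12[THEN not_sym] d12[THEN not_sym] e3ep[THEN not_sym]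
  have vne: "ga \<noteq> i1" "ga \<noteq> i2" "i1 \<noteq> i2" "i1 \<noteq> ga" "i2 \<noteq> ga" "i2 \<noteq> i1" using dis by auto
  have fresh: "\<And>x. x \<in> V A \<Longrightarrow> x \<noteq> ga \<and> x \<noteq> i1 \<and> x \<noteq> i2" using gaV i1V i2V by auto
  have loA: "\<And>e. e \<in> E A \<Longrightarrow> lo A e \<in> Vx ` V A \<union> {Bot}" using struct_lo[OF S] .
  have upA: "\<And>e. e \<in> E A \<Longrightarrow> up A e \<in> Vx ` V A \<union> {Top}" using struct_up[OF S] .
  have fr_lo: "\<And>e x. e \<in> E A \<Longrightarrow> lo A e = Vx x \<Longrightarrow> x \<in> V A" using loA by force
  have fr_up: "\<And>e x. e \<in> E A \<Longrightarrow> up A e = Vx x \<Longrightarrow> x \<in> V A" using upA by force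
  have U_nu: "lower_edges A ka = {e1, e2}"
    by (rule exact2[OF fin_ul(2)[OF fin]]) (use e1E e2E lo1 lo2 e12 struct_cl[OF S kaV] labnu in \<open>auto simp: lower_edges_def\<close>)
  have L_nu: "upper_edges A ka = {e4}"
    by (rule exact1[OF fin_ul(1)[OF fin]]) (use e4E upep struct_cu[OF S kaV] labnu in \<open>auto simp: upper_edges_def\<close>)
  have U_mu: "lower_edges A io = {e4, e3}"
    by (rule exact2[OF fin_ul(2)[OF fin]]) (use e4E e3E loep lo3 e3ep struct_cl[OF S ioV] labmu in \<open>auto simp: lower_edges_def\<close>)
  have L_mu: "upper_edges A io = {}"
    by (rule exact0[OF fin_ul(1)[OF fin]]) (use struct_cu[OF S ioV] labmu in auto)
  have inc_lo_nu: "\<And>e. e \<in> E A \<Longrightarrow> up A e = Vx ka \<Longrightarrow> e = e1 \<or> e = e2" using U_nu unfolding lower_edges_def by blast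
  have inc_up_nu: "\<And>e. e \<in> E A \<Longrightarrow> lo A e = Vx ka \<Longrightarrow> e = e4" using L_nu unfolding upper_edges_def by blast
  have inc_lo_mu: "\<And>e. e \<in> E A \<Longrightarrow> up A e = Vx io \<Longrightarrow> e = e4 \<or> e = e3" using U_mu unfolding lower_edges_def by blast
  have inc_up_mu: "\<And>e. e \<in> E A \<Longrightarrow> lo A e \<noteq> Vx io" using L_mu unfolding upper_edges_def by blast
  define s where "s = \<pi> e4"
  have P: "pol A \<pi>" using struct_pol[OF S] .
  have s1: "\<pi> e1 = s" using pol_cc[OF P kaV, of e1 e4] labnu U_nu L_nu s_def by auto
  have s2: "\<pi> e2 = s" using pol_cc[OF P kaV, of e2 e4] labnu U_nu L_nu s_def by auto
  have s3: "\<pi> e3 = (\<not> s)" using pol_ic[OF P ioV, of e3 e4] labmu U_mu e3ep s_def by auto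
  have rk: "(s \<longrightarrow> r io < r ka) \<and> (\<not> s \<longrightarrow> r ka < r io)" using struct_rank[OF S e4E loep upep] s_def by simp
  have EB': "\<And>e. e \<in> E B \<longleftrightarrow> (e \<in> E A \<and> e \<noteq> e4) \<or> e = d1 \<or> e = d2" using EB by auto
  have loB: "lo B e = (if e = d1 \<or> e = d2 then Vx ga else lo A e)" if eB: "e \<in> E B" for e
  proof -
    have "e \<in> E A - {e4} \<union> {d1, d2}" using EB eB by simp
    then have "lo B e = ((lo A)(d1 := Vx ga, d2 := Vx ga)) e" using ulB by blast
    then show ?thesis by simp
  qed
  have upB: "up B e = (if e = e3 then Vx ga else if e = e1 \<or> e = d1 then Vx i1
      else if e = e2 \<or> e = d2 then Vx i2 else up A e)" if eB: "e \<in> E B" for e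
  proof -
    have "e \<in> E A - {e4} \<union> {d1, d2}" using EB eB by simp
    then have "up B e = ((up A)(e3 := Vx ga, e1 := Vx i1, d1 := Vx i1, e2 := Vx i2, d2 := Vx i2)) e" using ulB by blast
    then show ?thesis using ne dne e12 d12 by simp
  qed
  have labB': "lab B v = (if v = ga then Contraction else if v = i1 \<or> v = i2 then Interaction else lab A v)" if vB: "v \<in> V B" for v
  proof -
    have "v \<in> V A - {io, ka} \<union> {ga, i1, i2}" using VB vB by simp
    then have "lab B v = ((lab A)(ga := Contraction, i1 := Interaction, i2 := Interaction)) v" using labB by blast
    then show ?thesis using vne by auto
  qed
  define \<pi>' where "\<pi>' = \<pi>(d1 := (\<not> s), d2 := (\<not> s))"
  define r' where "r' = r(ga := r io, i1 := r ka, i2 := r ka)"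
  have pi_old: "\<And>e. e \<in> E A \<Longrightarrow> \<pi>' e = \<pi> e" using \<pi>'_def d1E d2E by auto
  have r_old: "\<And>x. x \<in> V A \<Longrightarrow> r' x = r x" using r'_def fresh by auto
  have LB_old: "\<And>v. v \<in> V A \<Longrightarrow> lower_edges B v \<subseteq> lower_edges A v"
  proof
    fix v e assume v: "v \<in> V A" and e: "e \<in> lower_edges B v"
    then have eB: "e \<in> E B" and l: "up B e = Vx v" unfolding lower_edges_def by auto
    show "e \<in> lower_edges A v"
    proof (cases "e = e3 \<or> e = e1 \<or> e = d1 \<or> e = e2 \<or> e = d2")
      case True then show ?thesis using upB[OF eB] l fresh[OF v] dist by auto
    next
      case False then show ?thesis using upB[OF eB] l EB' eB unfolding lower_edges_def by auto
    qed
  qed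
  have UB_old: "\<And>v. v \<in> V A \<Longrightarrow> upper_edges B v \<subseteq> upper_edges A v"
  proof
    fix v e assume v: "v \<in> V A" and e: "e \<in> upper_edges B v"
    then have eB: "e \<in> E B" and l: "lo B e = Vx v" unfolding upper_edges_def by auto
    show "e \<in> upper_edges A v"
    proof (cases "e = d1 \<or> e = d2")
      case True then show ?thesis using loB[OF eB] l fresh[OF v] by auto
    next
      case False then show ?thesis using loB[OF eB] l EB' eB unfolding upper_edges_def by auto
    qed
  qed
  have lo_new: "\<And>e. e \<in> E B \<Longrightarrow> lo B e = Vx ga \<Longrightarrow> e = d1 \<or> e = d2"
    using loB EB' fr_lo gaV by (metis node.inject)
  have lo_new1: "\<And>e x. e \<in> E B \<Longrightarrow> lo B e = Vx x \<Longrightarrow> x = i1 \<or> x = i2 \<Longrightarrow> False"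
    using loB EB' fr_lo i1V i2V vne by (metis node.inject)
  have up_ka: "\<And>e. e \<in> E B \<Longrightarrow> up B e = Vx ga \<Longrightarrow> e = e3"
  proof -
    fix e assume e: "e \<in> E B" "up B e = Vx ga"
    show "e = e3"
    proof (rule ccontr)
      assume "e \<noteq> e3"
      then show False using upB[OF e(1)] e(2) vne EB' e(1) fr_up gaV by (auto split: if_splits)
    qed
  qed
  have up_c1: "\<And>e. e \<in> E B \<Longrightarrow> up B e = Vx i1 \<Longrightarrow> e = e1 \<or> e = d1"
  proof -
    fix e assume e: "e \<in> E B" "up B e = Vx i1"
    show "e = e1 \<or> e = d1"
    proof (rule ccontr)
      assume "\<not> (e = e1 \<or> e = d1)"
      then show False using upB[OF e(1)] e(2) vne EB' e(1) fr_up i1V by (auto split: if_splits)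
    qed
  qed
  have up_c2: "\<And>e. e \<in> E B \<Longrightarrow> up B e = Vx i2 \<Longrightarrow> e = e2 \<or> e = d2"
  proof -
    fix e assume e: "e \<in> E B" "up B e = Vx i2"
    show "e = e2 \<or> e = d2"
    proof (rule ccontr)
      assume "\<not> (e = e2 \<or> e = d2)"
      then show False using upB[OF e(1)] e(2) vne EB' e(1) fr_up i2V by (auto split: if_splits)
    qed
  qed
  have inc_ka: "lower_edges B ga \<union> upper_edges B ga \<subseteq> {e3, d1, d2}"
    using up_ka lo_new unfolding lower_edges_def upper_edges_def by blast
  have inc_c1: "lower_edges B i1 \<union> upper_edges B i1 \<subseteq> {e1, d1}"
    using up_c1 lo_new1 unfolding lower_edges_def upper_edges_def by blast
  have inc_c2: "lower_edges B i2 \<union> upper_edges B i2 \<subseteq> {e2, d2}"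
    using up_c2 lo_new1 unfolding lower_edges_def upper_edges_def by blast
  have finB: "finite (E B)" using fin EB by simp
  have oldV: "\<And>v. v \<in> V B \<Longrightarrow> v \<noteq> ga \<Longrightarrow> v \<noteq> i1 \<Longrightarrow> v \<noteq> i2 \<Longrightarrow> v \<in> V A \<and> v \<noteq> ka \<and> v \<noteq> io"
    using VB by auto
  have "struct B \<pi>' r'"
  proof (rule structI)
    show "finite (E B)" using finB .
  next
    fix e assume eB: "e \<in> E B"
    show "lo B e \<in> Vx ` V B \<union> {Bot}"
    proof (cases "e = d1 \<or> e = d2")
      case True then show ?thesis using loB[OF eB] VB by auto
    next
      case False
      then have eA: "e \<in> E A" "e \<noteq> e4" using EB' eB by auto
      have u: "lo B e = lo A e" using loB[OF eB] False by simp
      show ?thesis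
      proof (cases "lo A e")
        case (Vx x)
        then have "x \<in> V A" using fr_lo eA by blast
        moreover have "x \<noteq> ka" using inc_up_nu[OF eA(1)] Vx eA(2) by auto
        moreover have "x \<noteq> io" using inc_up_mu[OF eA(1)] Vx by auto
        ultimately show ?thesis using u Vx VB by auto
      qed (use u loA[OF eA(1)] in auto)
    qed
  next
    fix e assume eB: "e \<in> E B"
    show "up B e \<in> Vx ` V B \<union> {Top}"
    proof (cases "e = e3 \<or> e = e1 \<or> e = d1 \<or> e = e2 \<or> e = d2")
      case True then show ?thesis using upB[OF eB] VB by auto
    next
      case False
      then have eA: "e \<in> E A" "e \<noteq> e4" using EB' eB by auto
      have u: "up B e = up A e" using upB[OF eB] False by simp
      show ?thesis
      proof (cases "up A e")
        case (Vx x)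
        then have "x \<in> V A" using fr_up eA by blast
        moreover have "x \<noteq> ka" using inc_lo_nu[OF eA(1)] Vx False by auto
        moreover have "x \<noteq> io" using inc_lo_mu[OF eA(1)] Vx eA(2) False by auto
        ultimately show ?thesis using u Vx VB by auto
      qed (use u upA[OF eA(1)] in auto)
    qed
  next
    fix v assume vB: "v \<in> V B"
    show "card (lower_edges B v) \<le> n_lower (lab B v)"
    proof (cases "v = ga \<or> v = i1 \<or> v = i2")
      case True
      then show ?thesis
      proof (elim disjE)
        assume v: "v = ga"
        have "card (lower_edges B v) \<le> card {e3}" using up_ka v unfolding lower_edges_def by (intro card_mono) auto
        then show ?thesis using labB'[OF vB] v by simp
      next
        assume v: "v = i1"
        have "card (lower_edges B v) \<le> card {e1, d1}" using inc_c1 v by (intro card_mono) auto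
        then show ?thesis using labB'[OF vB] v vne card_le2[of e1 d1] by simp
      next
        assume v: "v = i2"
        have "card (lower_edges B v) \<le> card {e2, d2}" using inc_c2 v by (intro card_mono) auto
        then show ?thesis using labB'[OF vB] v vne card_le2[of e2 d2] by simp
      qed
    next
      case False
      then have o: "v \<in> V A" using oldV[OF vB] by auto
      have "card (lower_edges B v) \<le> card (lower_edges A v)" using LB_old[OF o] fin_ul[OF fin] by (intro card_mono) auto
      then show ?thesis using struct_cl[OF S o] labB'[OF vB] False by simp
    qed
  next
    fix v assume vB: "v \<in> V B"
    show "card (upper_edges B v) \<le> n_upper (lab B v)"
    proof (cases "v = ga \<or> v = i1 \<or> v = i2")
      case True
      then show ?thesis
      proof (elim disjE)
        assume v: "v = ga"
        have "card (upper_edges B v) \<le> card {d1, d2}" using lo_new v unfolding upper_edges_def by (intro card_mono) auto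
        then show ?thesis using labB'[OF vB] v card_le2[of d1 d2] by simp
      next
        assume v: "v = i1"
        have "upper_edges B v = {}" using lo_new1 v unfolding upper_edges_def by blast
        then show ?thesis by simp
      next
        assume v: "v = i2"
        have "upper_edges B v = {}" using lo_new1 v unfolding upper_edges_def by blast
        then show ?thesis by simp
      qed
    next
      case False
      then have o: "v \<in> V A" using oldV[OF vB] by auto
      have "card (upper_edges B v) \<le> card (upper_edges A v)" using UB_old[OF o] fin_ul[OF fin] by (intro card_mono) auto
      then show ?thesis using struct_cu[OF S o] labB'[OF vB] False by simp
    qed
  next
    fix v e e' assume vB: "v \<in> V B" and lv: "lab B v \<in> {Contraction, Cocontraction}"
      and e: "e \<in> upper_edges B v \<union> lower_edges B v" and e': "e' \<in> upper_edges B v \<union> lower_edges B v"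
    show "\<pi>' e = \<pi>' e'"
    proof (cases "v = ga \<or> v = i1 \<or> v = i2")
      case True
      then have "v = ga" using lv labB'[OF vB] vne by auto
      then have "e \<in> {e3, d1, d2}" "e' \<in> {e3, d1, d2}" using inc_ka e e' by auto
      then show ?thesis using s3 ne dne d12 \<pi>'_def by auto
    next
      case False
      then have o: "v \<in> V A" using oldV[OF vB] by auto
      have ee: "e \<in> upper_edges A v \<union> lower_edges A v" "e' \<in> upper_edges A v \<union> lower_edges A v"
        using LB_old[OF o] UB_old[OF o] e e' by auto
      then have "e \<in> E A" "e' \<in> E A" unfolding lower_edges_def upper_edges_def by auto
      then show ?thesis using pol_cc[OF P o _ ee] lv labB'[OF vB] False pi_old by auto
    qed
  next
    fix v e e' assume vB: "v \<in> V B" and lv: "lab B v \<in> {Interaction, Cut}"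
      and e: "e \<in> upper_edges B v \<union> lower_edges B v" and e': "e' \<in> upper_edges B v \<union> lower_edges B v"
      and nee: "e \<noteq> e'"
    show "\<pi>' e \<noteq> \<pi>' e'"
    proof (cases "v = ga \<or> v = i1 \<or> v = i2")
      case True
      then have "v = i1 \<or> v = i2" using lv labB'[OF vB] vne by auto
      then show ?thesis
      proof
        assume "v = i1"
        then have "e \<in> {e1, d1}" "e' \<in> {e1, d1}" using inc_c1 e e' by auto
        then show ?thesis using nee s1 dne \<pi>'_def by auto
      next
        assume "v = i2"
        then have "e \<in> {e2, d2}" "e' \<in> {e2, d2}" using inc_c2 e e' by auto
        then show ?thesis using nee s2 dne \<pi>'_def by auto
      qed
    next
      case False
      then have o: "v \<in> V A" using oldV[OF vB] by auto
      have ee: "e \<in> upper_edges A v \<union> lower_edges A v" "e' \<in> upper_edges A v \<union> lower_edges A v"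
        using LB_old[OF o] UB_old[OF o] e e' by auto
      then have "e \<in> E A" "e' \<in> E A" unfolding lower_edges_def upper_edges_def by auto
      then show ?thesis using pol_ic[OF P o _ ee nee] lv labB'[OF vB] False pi_old by auto
    qed
  next
    fix e b a assume eB: "e \<in> E B" and lb: "up B e = Vx b" and ua: "lo B e = Vx a"
    have "(\<pi>' e \<longrightarrow> r' b < r' a) \<and> (\<not> \<pi>' e \<longrightarrow> r' a < r' b)"
    proof (cases "e = d1 \<or> e = d2")
      case True
      then have "a = ga" "b = i1 \<or> b = i2" "\<pi>' e = (\<not> s)"
        using loB[OF eB] upB[OF eB] ua lb dne d12 \<pi>'_def by (auto split: if_splits)
      then show ?thesis using rk r'_def vne by auto
    next
      case False
      then have eA: "e \<in> E A" "e \<noteq> e4" using EB' eB by auto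
      have uA: "lo A e = Vx a" using loB[OF eB] ua False by simp
      have aV: "a \<in> V A" using fr_lo[OF eA(1) uA] .
      have pe: "\<pi>' e = \<pi> e" using pi_old[OF eA(1)] .
      show ?thesis
      proof (cases "e = e3 \<or> e = e1 \<or> e = e2")
        case True
        then show ?thesis
        proof (elim disjE)
          assume ee: "e = e3"
          then have "b = ga" using upB[OF eB] lb by simp
          then show ?thesis using struct_rank[OF S e3E lo3 uA[unfolded ee]] ee pe r_old[OF aV] r'_def vne by auto
        next
          assume ee: "e = e1"
          then have "b = i1" using upB[OF eB] lb dist by simp
          then show ?thesis using struct_rank[OF S e1E lo1 uA[unfolded ee]] ee pe r_old[OF aV] r'_def vne by auto
        next
          assume ee: "e = e2"
          then have "b = i2" using upB[OF eB] lb dist by simp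
          then show ?thesis using struct_rank[OF S e2E lo2 uA[unfolded ee]] ee pe r_old[OF aV] r'_def vne by auto
        qed
      next
        case F2: False
        then have lA: "up A e = Vx b" using upB[OF eB] lb False by simp
        have bV: "b \<in> V A" using fr_up[OF eA(1) lA] .
        show ?thesis using struct_rank[OF S eA(1) lA uA] pe r_old[OF aV] r_old[OF bV] by simp
      qed
    qed
    then show "\<pi>' e \<Longrightarrow> r' b < r' a" "\<not> \<pi>' e \<Longrightarrow> r' a < r' b" by auto
  qed
  then show ?thesis by blast
qed


lemma c3_pres:
  assumes S: "struct A \<pi> r" and st: "step_c3 A B"
  shows "\<exists>\<pi>' r'. struct B \<pi>' r'"
proof -
  obtain ga ka ep e1 e2 e3 e4 k1 k2 g3 g4 d13 d14 d23 d24 where H: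
    "ga \<in> V A \<and> ka \<in> V A \<and> lab A ga = Contraction \<and> lab A ka = Cocontraction
     \<and> {ep, e1, e2, e3, e4} \<subseteq> E A \<and> e1 \<noteq> e2 \<and> e3 \<noteq> e4
     \<and> lo A e1 = Vx ga \<and> lo A e2 = Vx ga \<and> up A ep = Vx ga \<and> lo A ep = Vx ka
     \<and> up A e3 = Vx ka \<and> up A e4 = Vx ka
     \<and> k1 \<notin> V A \<and> k2 \<notin> V A \<and> g3 \<notin> V A \<and> g4 \<notin> V A \<and> distinct [k1, k2, g3, g4]
     \<and> d13 \<notin> E A \<and> d14 \<notin> E A \<and> d23 \<notin> E A \<and> d24 \<notin> E A \<and> distinct [d13, d14, d23, d24]
     \<and> is_flow_on B (V A - {ga, ka} \<union> {k1, k2, g3, g4}) (E A - {ep} \<union> {d13, d14, d23, d24})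
         ((lab A)(k1 := Cocontraction, k2 := Cocontraction, g3 := Contraction, g4 := Contraction))
         ((up A)(e3 := Vx g3, e4 := Vx g4, d13 := Vx k1, d14 := Vx k1, d23 := Vx k2, d24 := Vx k2))
         ((lo A)(e1 := Vx k1, e2 := Vx k2, d13 := Vx g3, d14 := Vx g4, d23 := Vx g3, d24 := Vx g4))"
    using st unfolding step_c3_def by (elim exE) (rule that, assumption)
  have gaV: "ga \<in> V A" and kaV: "ka \<in> V A" and labga: "lab A ga = Contraction" and labka: "lab A ka = Cocontraction"
    and Es: "{ep, e1, e2, e3, e4} \<subseteq> E A" and e12: "e1 \<noteq> e2" and e34: "e3 \<noteq> e4"
    and lo1: "lo A e1 = Vx ga" and lo2: "lo A e2 = Vx ga" and upep: "up A ep = Vx ga" and loep: "lo A ep = Vx ka"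
    and up3: "up A e3 = Vx ka" and up4: "up A e4 = Vx ka"
    and k1V: "k1 \<notin> V A" and k2V: "k2 \<notin> V A" and g3V: "g3 \<notin> V A" and g4V: "g4 \<notin> V A" and dis: "distinct [k1, k2, g3, g4]"
    and dE: "d13 \<notin> E A" "d14 \<notin> E A" "d23 \<notin> E A" "d24 \<notin> E A" and ddis: "distinct [d13, d14, d23, d24]"
    and VB: "V B = V A - {ga, ka} \<union> {k1, k2, g3, g4}" and EB: "E B = E A - {ep} \<union> {d13, d14, d23, d24}"
    and labB: "\<forall>v \<in> V A - {ga, ka} \<union> {k1, k2, g3, g4}. lab B v = ((lab A)(k1 := Cocontraction, k2 := Cocontraction, g3 := Contraction, g4 := Contraction)) v"
    and ulB: "\<forall>e \<in> E A - {ep} \<union> {d13, d14, d23, d24}. up B e = ((up A)(e3 := Vx g3, e4 := Vx g4, d13 := Vx k1, d14 := Vx k1, d23 := Vx k2, d24 := Vx k2)) e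
              \<and> lo B e = ((lo A)(e1 := Vx k1, e2 := Vx k2, d13 := Vx g3, d14 := Vx g4, d23 := Vx g3, d24 := Vx g4)) e"
    using H unfolding is_flow_on_def by blast+
  have epE: "ep \<in> E A" and e1E: "e1 \<in> E A" and e2E: "e2 \<in> E A" and e3E: "e3 \<in> E A" and e4E: "e4 \<in> E A" using Es by auto
  have fin: "finite (E A)" using struct_fin[OF S] .
  have gaka: "ga \<noteq> ka" using labga labka by auto
  define s where "s = \<pi> ep"
  have rk: "(s \<longrightarrow> r ga < r ka) \<and> (\<not> s \<longrightarrow> r ka < r ga)" using struct_rank[OF S epE upep loep] s_def by simp
  have P: "pol A \<pi>" using struct_pol[OF S] .
  have U_ga: "upper_edges A ga = {e1, e2}"
    by (rule exact2[OF fin_ul(1)[OF fin]]) (use e1E e2E lo1 lo2 e12 struct_cu[OF S gaV] labga in \<open>auto simp: upper_edges_def\<close>)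
  have L_ga: "lower_edges A ga = {ep}"
    by (rule exact1[OF fin_ul(2)[OF fin]]) (use epE upep struct_cl[OF S gaV] labga in \<open>auto simp: lower_edges_def\<close>)
  have U_ka: "upper_edges A ka = {ep}"
    by (rule exact1[OF fin_ul(1)[OF fin]]) (use epE loep struct_cu[OF S kaV] labka in \<open>auto simp: upper_edges_def\<close>)
  have L_ka: "lower_edges A ka = {e3, e4}"
    by (rule exact2[OF fin_ul(2)[OF fin]]) (use e3E e4E up3 up4 e34 struct_cl[OF S kaV] labka in \<open>auto simp: lower_edges_def\<close>)
  have s1: "\<pi> e1 = s" using pol_cc[OF P gaV, of e1 ep] labga U_ga L_ga s_def by auto
  have s2: "\<pi> e2 = s" using pol_cc[OF P gaV, of e2 ep] labga U_ga L_ga s_def by auto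
  have s3: "\<pi> e3 = s" using pol_cc[OF P kaV, of e3 ep] labka U_ka L_ka s_def by auto
  have s4: "\<pi> e4 = s" using pol_cc[OF P kaV, of e4 ep] labka U_ka L_ka s_def by auto
  have noback: "\<And>e. e \<in> E A \<Longrightarrow> up A e = Vx ka \<Longrightarrow> lo A e = Vx ga \<Longrightarrow> \<pi> e = s \<Longrightarrow> False"
  proof -
    fix e assume "e \<in> E A" "up A e = Vx ka" "lo A e = Vx ga" "\<pi> e = s"
    then show False using struct_rank[OF S, of e ka ga] rk by auto
  qed
  have ne: "e1 \<noteq> ep" "e2 \<noteq> ep" "e3 \<noteq> ep" "e4 \<noteq> ep" "e1 \<noteq> e3" "e1 \<noteq> e4" "e2 \<noteq> e3" "e2 \<noteq> e4"
    using lo1 lo2 loep up3 up4 upep gaka noback[OF e1E] noback[OF e2E] s1 s2 by auto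
  have dne: "d13 \<noteq> ep" "d13 \<noteq> e1" "d13 \<noteq> e2" "d13 \<noteq> e3" "d13 \<noteq> e4"
    "d14 \<noteq> ep" "d14 \<noteq> e1" "d14 \<noteq> e2" "d14 \<noteq> e3" "d14 \<noteq> e4"
    "d23 \<noteq> ep" "d23 \<noteq> e1" "d23 \<noteq> e2" "d23 \<noteq> e3" "d23 \<noteq> e4"
    "d24 \<noteq> ep" "d24 \<noteq> e1" "d24 \<noteq> e2" "d24 \<noteq> e3" "d24 \<noteq> e4"
    using dE epE e1E e2E e3E e4E by auto
  have dd: "d13 \<noteq> d14" "d13 \<noteq> d23" "d13 \<noteq> d24" "d14 \<noteq> d23" "d14 \<noteq> d24" "d23 \<noteq> d24" using ddis by auto
  note dist = ne dne dd e12 e34 ne[THEN not_sym] dne[THEN not_sym] dd[THEN not_sym] e12[THEN not_sym] e34[THEN not_sym]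
  have vne: "k1 \<noteq> k2" "k1 \<noteq> g3" "k1 \<noteq> g4" "k2 \<noteq> g3" "k2 \<noteq> g4" "g3 \<noteq> g4"
    "k2 \<noteq> k1" "g3 \<noteq> k1" "g4 \<noteq> k1" "g3 \<noteq> k2" "g4 \<noteq> k2" "g4 \<noteq> g3" using dis by auto
  have fresh: "\<And>x. x \<in> V A \<Longrightarrow> x \<noteq> k1 \<and> x \<noteq> k2 \<and> x \<noteq> g3 \<and> x \<noteq> g4" using k1V k2V g3V g4V by auto
  have upA: "\<And>e. e \<in> E A \<Longrightarrow> up A e \<in> Vx ` V A \<union> {Top}" using struct_up[OF S] .
  have loA: "\<And>e. e \<in> E A \<Longrightarrow> lo A e \<in> Vx ` V A \<union> {Bot}" using struct_lo[OF S] .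
  have fr_up: "\<And>e x. e \<in> E A \<Longrightarrow> up A e = Vx x \<Longrightarrow> x \<in> V A" using upA by force
  have fr_lo: "\<And>e x. e \<in> E A \<Longrightarrow> lo A e = Vx x \<Longrightarrow> x \<in> V A" using loA by force
  have inc_lo_ga: "\<And>e. e \<in> E A \<Longrightarrow> lo A e = Vx ga \<Longrightarrow> e = e1 \<or> e = e2" using U_ga unfolding upper_edges_def by blast
  have inc_up_ga: "\<And>e. e \<in> E A \<Longrightarrow> up A e = Vx ga \<Longrightarrow> e = ep" using L_ga unfolding lower_edges_def by blast
  have inc_lo_ka: "\<And>e. e \<in> E A \<Longrightarrow> lo A e = Vx ka \<Longrightarrow> e = ep" using U_ka unfolding upper_edges_def by blast
  have inc_up_ka: "\<And>e. e \<in> E A \<Longrightarrow> up A e = Vx ka \<Longrightarrow> e = e3 \<or> e = e4" using L_ka unfolding lower_edges_def by blast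
  have EB': "\<And>e. e \<in> E B \<longleftrightarrow> (e \<in> E A \<and> e \<noteq> ep) \<or> e = d13 \<or> e = d14 \<or> e = d23 \<or> e = d24" using EB by auto
  have upB: "up B e = (if e = e3 then Vx g3 else if e = e4 then Vx g4 else if e = d13 \<or> e = d14 then Vx k1
      else if e = d23 \<or> e = d24 then Vx k2 else up A e)" if eB: "e \<in> E B" for e
  proof -
    have "e \<in> E A - {ep} \<union> {d13, d14, d23, d24}" using EB eB by simp
    then have "up B e = ((up A)(e3 := Vx g3, e4 := Vx g4, d13 := Vx k1, d14 := Vx k1, d23 := Vx k2, d24 := Vx k2)) e" using ulB by blast
    then show ?thesis using dist by simp
  qed
  have loB: "lo B e = (if e = e1 then Vx k1 else if e = e2 then Vx k2 else if e = d13 \<or> e = d23 then Vx g3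
      else if e = d14 \<or> e = d24 then Vx g4 else lo A e)" if eB: "e \<in> E B" for e
  proof -
    have "e \<in> E A - {ep} \<union> {d13, d14, d23, d24}" using EB eB by simp
    then have "lo B e = ((lo A)(e1 := Vx k1, e2 := Vx k2, d13 := Vx g3, d14 := Vx g4, d23 := Vx g3, d24 := Vx g4)) e" using ulB by blast
    then show ?thesis using dist by simp
  qed
  have labB': "lab B v = (if v = k1 \<or> v = k2 then Cocontraction else if v = g3 \<or> v = g4 then Contraction else lab A v)" if vB: "v \<in> V B" for v
  proof -
    have "v \<in> V A - {ga, ka} \<union> {k1, k2, g3, g4}" using VB vB by simp
    then have "lab B v = ((lab A)(k1 := Cocontraction, k2 := Cocontraction, g3 := Contraction, g4 := Contraction)) v" using labB by blast
    then show ?thesis using vne by auto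
  qed
  define \<pi>' where "\<pi>' = \<pi>(d13 := s, d14 := s, d23 := s, d24 := s)"
  define r' where "r' = r(k1 := r ga, k2 := r ga, g3 := r ka, g4 := r ka)"
  have pi_old: "\<And>e. e \<in> E A \<Longrightarrow> \<pi>' e = \<pi> e" using \<pi>'_def dE by auto
  have r_old: "\<And>x. x \<in> V A \<Longrightarrow> r' x = r x" using r'_def fresh by auto
  have UB_old: "\<And>v. v \<in> V A \<Longrightarrow> upper_edges B v \<subseteq> upper_edges A v"
  proof
    fix v e assume v: "v \<in> V A" and e: "e \<in> upper_edges B v"
    then have eB: "e \<in> E B" and l: "lo B e = Vx v" unfolding upper_edges_def by auto
    show "e \<in> upper_edges A v"
    proof (cases "e = e1 \<or> e = e2 \<or> e = d13 \<or> e = d14 \<or> e = d23 \<or> e = d24")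
      case True then show ?thesis using loB[OF eB] l fresh[OF v] dist by auto
    next
      case False then show ?thesis using loB[OF eB] l EB' eB unfolding upper_edges_def by auto
    qed
  qed
  have LB_old: "\<And>v. v \<in> V A \<Longrightarrow> lower_edges B v \<subseteq> lower_edges A v"
  proof
    fix v e assume v: "v \<in> V A" and e: "e \<in> lower_edges B v"
    then have eB: "e \<in> E B" and l: "up B e = Vx v" unfolding lower_edges_def by auto
    show "e \<in> lower_edges A v"
    proof (cases "e = e3 \<or> e = e4 \<or> e = d13 \<or> e = d14 \<or> e = d23 \<or> e = d24")
      case True then show ?thesis using upB[OF eB] l fresh[OF v] dist by auto
    next
      case False then show ?thesis using upB[OF eB] l EB' eB unfolding lower_edges_def by auto
    qed
  qed
  have up_new: "\<And>e x. e \<in> E B \<Longrightarrow> up B e = Vx x \<Longrightarrow> x \<notin> V A \<Longrightarrow>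
      (x = g3 \<and> e = e3) \<or> (x = g4 \<and> e = e4) \<or> (x = k1 \<and> (e = d13 \<or> e = d14)) \<or> (x = k2 \<and> (e = d23 \<or> e = d24))"
  proof -
    fix e x assume e: "e \<in> E B" "up B e = Vx x" "x \<notin> V A"
    show "(x = g3 \<and> e = e3) \<or> (x = g4 \<and> e = e4) \<or> (x = k1 \<and> (e = d13 \<or> e = d14)) \<or> (x = k2 \<and> (e = d23 \<or> e = d24))"
    proof (cases "e = e3 \<or> e = e4 \<or> e = d13 \<or> e = d14 \<or> e = d23 \<or> e = d24")
      case True then show ?thesis using upB[OF e(1)] e(2) dist by auto
    next
      case False
      then have "up A e = Vx x" "e \<in> E A" using upB[OF e(1)] e(2) EB' e(1) by auto
      then show ?thesis using fr_up e(3) by blast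
    qed
  qed
  have lo_new: "\<And>e x. e \<in> E B \<Longrightarrow> lo B e = Vx x \<Longrightarrow> x \<notin> V A \<Longrightarrow>
      (x = k1 \<and> e = e1) \<or> (x = k2 \<and> e = e2) \<or> (x = g3 \<and> (e = d13 \<or> e = d23)) \<or> (x = g4 \<and> (e = d14 \<or> e = d24))"
  proof -
    fix e x assume e: "e \<in> E B" "lo B e = Vx x" "x \<notin> V A"
    show "(x = k1 \<and> e = e1) \<or> (x = k2 \<and> e = e2) \<or> (x = g3 \<and> (e = d13 \<or> e = d23)) \<or> (x = g4 \<and> (e = d14 \<or> e = d24))"
    proof (cases "e = e1 \<or> e = e2 \<or> e = d13 \<or> e = d14 \<or> e = d23 \<or> e = d24")
      case True then show ?thesis using loB[OF e(1)] e(2) dist by auto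
    next
      case False
      then have "lo A e = Vx x" "e \<in> E A" using loB[OF e(1)] e(2) EB' e(1) by auto
      then show ?thesis using fr_lo e(3) by blast
    qed
  qed
  have U_k1: "upper_edges B k1 \<subseteq> {e1}" using lo_new k1V vne unfolding upper_edges_def by blast
  have L_k1: "lower_edges B k1 \<subseteq> {d13, d14}" using up_new k1V vne unfolding lower_edges_def by blast
  have U_k2: "upper_edges B k2 \<subseteq> {e2}" using lo_new k2V vne unfolding upper_edges_def by blast
  have L_k2: "lower_edges B k2 \<subseteq> {d23, d24}" using up_new k2V vne unfolding lower_edges_def by blast
  have U_g3: "upper_edges B g3 \<subseteq> {d13, d23}" using lo_new g3V vne unfolding upper_edges_def by blast
  have L_g3: "lower_edges B g3 \<subseteq> {e3}" using up_new g3V vne unfolding lower_edges_def by blast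
  have U_g4: "upper_edges B g4 \<subseteq> {d14, d24}" using lo_new g4V vne unfolding upper_edges_def by blast
  have L_g4: "lower_edges B g4 \<subseteq> {e4}" using up_new g4V vne unfolding lower_edges_def by blast
  have finB: "finite (E B)" using fin EB by simp
  have oldV: "\<And>v. v \<in> V B \<Longrightarrow> v \<noteq> k1 \<Longrightarrow> v \<noteq> k2 \<Longrightarrow> v \<noteq> g3 \<Longrightarrow> v \<noteq> g4 \<Longrightarrow> v \<in> V A \<and> v \<noteq> ga \<and> v \<noteq> ka"
    using VB by auto
  have allS: "\<pi>' e = s" if "e \<in> {e1, e2, e3, e4, d13, d14, d23, d24}" for e
  proof -
    have "e \<in> {e1, e2, e3, e4} \<or> e \<in> {d13, d14, d23, d24}" using that by blast
    then show ?thesis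
    proof
      assume "e \<in> {e1, e2, e3, e4}"
      then have "\<pi> e = s" "e \<in> E A" using s1 s2 s3 s4 e1E e2E e3E e4E by auto
      then show ?thesis using pi_old by simp
    next
      assume "e \<in> {d13, d14, d23, d24}"
      then show ?thesis unfolding \<pi>'_def by auto
    qed
  qed
  have cB: "finite Y \<Longrightarrow> card X \<le> card Y" if "X \<subseteq> Y" for X Y
    using card_mono that by blast
  have "struct B \<pi>' r'"
  proof (rule structI)
    show "finite (E B)" using finB .
  next
    fix e assume eB: "e \<in> E B"
    show "up B e \<in> Vx ` V B \<union> {Top}"
    proof (cases "e = e3 \<or> e = e4 \<or> e = d13 \<or> e = d14 \<or> e = d23 \<or> e = d24")
      case True then show ?thesis using upB[OF eB] VB by auto
    next
      case False
      then have eA: "e \<in> E A" "e \<noteq> ep" using EB' eB by auto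
      have u: "up B e = up A e" using upB[OF eB] False by simp
      show ?thesis
      proof (cases "up A e")
        case (Vx x)
        then have "x \<in> V A" using fr_up eA by blast
        moreover have "x \<noteq> ga" using inc_up_ga[OF eA(1)] Vx eA(2) by auto
        moreover have "x \<noteq> ka" using inc_up_ka[OF eA(1)] Vx False by auto
        ultimately show ?thesis using u Vx VB by auto
      qed (use u upA[OF eA(1)] in auto)
    qed
  next
    fix e assume eB: "e \<in> E B"
    show "lo B e \<in> Vx ` V B \<union> {Bot}"
    proof (cases "e = e1 \<or> e = e2 \<or> e = d13 \<or> e = d14 \<or> e = d23 \<or> e = d24")
      case True then show ?thesis using loB[OF eB] VB by auto
    next
      case False
      then have eA: "e \<in> E A" "e \<noteq> ep" using EB' eB by auto
      have u: "lo B e = lo A e" using loB[OF eB] False by simp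
      show ?thesis
      proof (cases "lo A e")
        case (Vx x)
        then have "x \<in> V A" using fr_lo eA by blast
        moreover have "x \<noteq> ga" using inc_lo_ga[OF eA(1)] Vx False by auto
        moreover have "x \<noteq> ka" using inc_lo_ka[OF eA(1)] Vx eA(2) by auto
        ultimately show ?thesis using u Vx VB by auto
      qed (use u loA[OF eA(1)] in auto)
    qed
  next
    fix v assume vB: "v \<in> V B"
    show "card (upper_edges B v) \<le> n_upper (lab B v)"
    proof (cases "v = k1 \<or> v = k2 \<or> v = g3 \<or> v = g4")
      case True
      then show ?thesis
      proof (elim disjE)
        assume v: "v = k1"
        then show ?thesis using cB[OF U_k1] labB'[OF vB] by simp
      next
        assume v: "v = k2"
        then show ?thesis using cB[OF U_k2] labB'[OF vB] vne by simp
      next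
        assume v: "v = g3"
        then show ?thesis using cB[OF U_g3] card_le2[of d13 d23] labB'[OF vB] vne by simp
      next
        assume v: "v = g4"
        then show ?thesis using cB[OF U_g4] card_le2[of d14 d24] labB'[OF vB] vne by simp
      qed
    next
      case False
      then have o: "v \<in> V A" using oldV[OF vB] by auto
      have "card (upper_edges B v) \<le> card (upper_edges A v)" using UB_old[OF o] fin_ul[OF fin] by (intro card_mono) auto
      then show ?thesis using struct_cu[OF S o] labB'[OF vB] False by simp
    qed
  next
    fix v assume vB: "v \<in> V B"
    show "card (lower_edges B v) \<le> n_lower (lab B v)"
    proof (cases "v = k1 \<or> v = k2 \<or> v = g3 \<or> v = g4")
      case True
      then show ?thesis
      proof (elim disjE)
        assume v: "v = k1"
        then show ?thesis using cB[OF L_k1] card_le2[of d13 d14] labB'[OF vB] by simp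
      next
        assume v: "v = k2"
        then show ?thesis using cB[OF L_k2] card_le2[of d23 d24] labB'[OF vB] vne by simp
      next
        assume v: "v = g3"
        then show ?thesis using cB[OF L_g3] labB'[OF vB] vne by simp
      next
        assume v: "v = g4"
        then show ?thesis using cB[OF L_g4] labB'[OF vB] vne by simp
      qed
    next
      case False
      then have o: "v \<in> V A" using oldV[OF vB] by auto
      have "card (lower_edges B v) \<le> card (lower_edges A v)" using LB_old[OF o] fin_ul[OF fin] by (intro card_mono) auto
      then show ?thesis using struct_cl[OF S o] labB'[OF vB] False by simp
    qed
  next
    fix v e e' assume vB: "v \<in> V B" and lv: "lab B v \<in> {Contraction, Cocontraction}"
      and e: "e \<in> upper_edges B v \<union> lower_edges B v" and e': "e' \<in> upper_edges B v \<union> lower_edges B v"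
    show "\<pi>' e = \<pi>' e'"
    proof (cases "v = k1 \<or> v = k2 \<or> v = g3 \<or> v = g4")
      case True
      then have "e \<in> {e1, e2, e3, e4, d13, d14, d23, d24}" "e' \<in> {e1, e2, e3, e4, d13, d14, d23, d24}"
        using e e' U_k1 L_k1 U_k2 L_k2 U_g3 L_g3 U_g4 L_g4 by blast+
      then show ?thesis using allS by metis
    next
      case False
      then have o: "v \<in> V A" using oldV[OF vB] by auto
      have ee: "e \<in> upper_edges A v \<union> lower_edges A v" "e' \<in> upper_edges A v \<union> lower_edges A v"
        using UB_old[OF o] LB_old[OF o] e e' by auto
      then have "e \<in> E A" "e' \<in> E A" unfolding upper_edges_def lower_edges_def by auto
      then show ?thesis using pol_cc[OF P o _ ee] lv labB'[OF vB] False pi_old by auto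
    qed
  next
    fix v e e' assume vB: "v \<in> V B" and lv: "lab B v \<in> {Interaction, Cut}"
      and e: "e \<in> upper_edges B v \<union> lower_edges B v" and e': "e' \<in> upper_edges B v \<union> lower_edges B v"
      and nee: "e \<noteq> e'"
    have False': "\<not> (v = k1 \<or> v = k2 \<or> v = g3 \<or> v = g4)" using lv labB'[OF vB] vne by auto
    then have o: "v \<in> V A" using oldV[OF vB] by auto
    have ee: "e \<in> upper_edges A v \<union> lower_edges A v" "e' \<in> upper_edges A v \<union> lower_edges A v"
      using UB_old[OF o] LB_old[OF o] e e' by auto
    then have "e \<in> E A" "e' \<in> E A" unfolding upper_edges_def lower_edges_def by auto
    then show "\<pi>' e \<noteq> \<pi>' e'" using pol_ic[OF P o _ ee nee] lv labB'[OF vB] False' pi_old by auto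
  next
    fix e a b assume eB: "e \<in> E B" and ua: "up B e = Vx a" and lb: "lo B e = Vx b"
    have "(\<pi>' e \<longrightarrow> r' a < r' b) \<and> (\<not> \<pi>' e \<longrightarrow> r' b < r' a)"
    proof (cases "e = d13 \<or> e = d14 \<or> e = d23 \<or> e = d24")
      case True
      then have "a = k1 \<or> a = k2" "b = g3 \<or> b = g4" "\<pi>' e = s"
        using upB[OF eB] loB[OF eB] ua lb allS dist by (auto split: if_splits)
      then show ?thesis using rk r'_def vne by auto
    next
      case False
      then have eA: "e \<in> E A" "e \<noteq> ep" using EB' eB by auto
      have pe: "\<pi>' e = \<pi> e" using pi_old[OF eA(1)] .
      show ?thesis
      proof (cases "e = e3 \<or> e = e4")
        case True
        then have "a = g3 \<or> a = g4" using upB[OF eB] ua dist False by (auto split: if_splits)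
        then have ra: "r' a = r ka" using r'_def vne by auto
        have lA: "lo A e = Vx b" using loB[OF eB] lb True dist by auto
        have bV: "b \<in> V A" using fr_lo[OF eA(1) lA] .
        have "up A e = Vx ka" using True up3 up4 by auto
        then show ?thesis using struct_rank[OF S eA(1) _ lA] pe ra r_old[OF bV] by simp
      next
        case F3: False
        have uA: "up A e = Vx a" using upB[OF eB] ua False F3 by simp
        have aV: "a \<in> V A" using fr_up[OF eA(1) uA] .
        show ?thesis
        proof (cases "e = e1 \<or> e = e2")
          case True
          then have "b = k1 \<or> b = k2" using loB[OF eB] lb dist by (auto split: if_splits)
          then have rb: "r' b = r ga" using r'_def vne by auto
          have "lo A e = Vx ga" using True lo1 lo2 by auto
          then show ?thesis using struct_rank[OF S eA(1) uA] pe rb r_old[OF aV] by simp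
        next
          case F2: False
          then have lA: "lo A e = Vx b" using loB[OF eB] lb False by simp
          have bV: "b \<in> V A" using fr_lo[OF eA(1) lA] .
          show ?thesis using struct_rank[OF S eA(1) uA lA] pe r_old[OF aV] r_old[OF bV] by simp
        qed
      qed
    qed
    then show "\<pi>' e \<Longrightarrow> r' a < r' b" "\<not> \<pi>' e \<Longrightarrow> r' b < r' a" by auto
  qed
  then show ?thesis by blast
qed


lemma step_pres:
  assumes "struct A \<pi> r" "step_c A B"
  shows "\<exists>\<pi>' r'. struct B \<pi>' r'"
  using assms c1_pres c2_pres c3_pres unfolding step_c_def by blast

lemma steps_pres:
  assumes "step_c\<^sup>*\<^sup>* A B" "\<exists>\<pi> r. struct A \<pi> r"
  shows "\<exists>\<pi> r. struct B \<pi> r"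
  using assms
proof (induction rule: rtranclp_induct)
  case base then show ?case .
next
  case (step y z)
  then obtain \<pi> r where "struct y \<pi> r" by blast
  then show ?case using step_pres step.hyps(2) by blast
qed

theorem proposition4p17:
  fixes A B :: "(nat, nat) flow"
  assumes "atomic_flow A"
    and "cycle_free A"
    and "step_c\<^sup>*\<^sup>* A B"
  shows "cycle_free B"
proof -
  have "\<exists>\<pi> r. struct A \<pi> r" using A_struct[OF assms(1,2)] .
  then obtain \<pi> r where "struct B \<pi> r" using steps_pres[OF assms(3)] by blast
  then show ?thesis using struct_cf by blast
qed

end
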